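(* Let $\mathcal S$ be a $\frac{31}{32}$-sparse family of dyadic cubes in $(\mathbb R_+,|\cdot|,\mu)$ and let $\phi$ be a Young function with $$K_\phi:=\sum_{k=1}^\infty\frac{k}{\overline\phi^{-1}(32^{2^k})}<\infty.$$ Then for every non-negative locally integrable $w$ and all $t>0$, $$w(\{x\in\mathbb R_+:|\mathcal A_{\mathcal S,L\log L}f(x)|>t\})\le C\,K_\phi\int_{\mathbb R_+}\Phi\Big(\frac{|f(x)|}t\Big)M_\phi\Big(\frac w\mu\Big)(x)\,d\mu(x),$$ where $\Phi(x)=x\log(e+x)$ and $C$ is an absolute constant (depending at most on $\lambda$).
   Context: On $\mathbb R_+=(0,\infty)$, $d\mu(x)=x^{2\lambda}dx$ ($\lambda>0$); $w(E)=\int_Ew\,dx$; $\frac w\mu$ denotes $x\mapsto w(x)x^{-2\lambda}$. A Young function is a convex increasing $\phi:[0,\infty)\to[0,\infty)$ with $\phi(0)=0$, $\phi(t)\to\infty$; $\overline\phi(s)=\sup_{t>0}(st-\phi(t))$ is its complementary function. Luxemburg average: $\|g\|_{\psi,Q}=\inf\{\gamma>0:\frac1{\mu(Q)}\int_Q\psi(|g|/\gamma)d\mu\le1\}$; $\|g\|_{L\log L,Q}$ denotes this with $\psi(x)=x\log(e+x)$; $M_\phi g(x)=\sup_{B\ni x}\|g\|_{\phi,B}$ over intervals $B$. $\mathcal D$ is a fixed system of dyadic cubes on the space of homogeneous type $(\mathbb R_+,|\cdot|,\mu)$. $\mathcal S\subset\mathcal D$ is $\eta$-sparse if for every $Q\in\mathcal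 S$ there is measurable $E_Q\subset Q$ with $\mu(E_Q)\ge\eta\mu(Q)$ and the $E_Q$ have finite overlap. $\mathcal A_{\mathcal S,L\log L}f(x):=\sum_{Q\in\mathcal S}\|f\|_{L\log L,Q}\chi_Q(x)$. *)

theory Defs
  imports "HOL-Analysis.Analysis"
begin

definition mu :: "real \<Rightarrow> real measure" where
  "mu lam = density lborel (\<lambda>x. ennreal (indicator {0<..} x * x powr (2 * lam)))"

definition dyadic :: "real set set" where
  "dyadic = {{real k * 2 powr (real_of_int j) <.. (real k + 1) * 2 powr (real_of_int j)} | k j. True}"

definition sparse :: "real \<Rightarrow> real \<Rightarrow> real set set \<Rightarrow> bool" where
  "sparse lam eta S \<longleftrightarrow> S \<subseteq> dyadic \<and>
     (\<exists>E. (\<forall>Q\<in>S. E Q \<in> sets borel \<and> E Q \<subseteq> Q \<and>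
               ennreal eta * emeasure (mu lam) Q \<le> emeasure (mu lam) (E Q))
          \<and> disjoint_family_on E S)"

definition young :: "(real \<Rightarrow> real) \<Rightarrow> bool" where
  "young \<phi> \<longleftrightarrow> convex_on {0..} \<phi> \<and> mono_on {0..} \<phi> \<and> (\<forall>t\<ge>0. 0 \<le> \<phi> t) \<and>
      \<phi> 0 = 0 \<and> filterlim \<phi> at_top at_top"

definition young_conj :: "(real \<Rightarrow> real) \<Rightarrow> real \<Rightarrow> ereal" where
  "young_conj \<phi> s = (SUP t\<in>{0<..}. ereal (s * t - \<phi> t))"

definition conj_inv :: "(real \<Rightarrow> real) \<Rightarrow> real \<Rightarrow> real" where
  "conj_inv \<phi> s = Sup {r. 0 \<le> r \<and> young_conj \<phi> r \<le> ereal s}"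

definition K_term :: "(real \<Rightarrow> real) \<Rightarrow> nat \<Rightarrow> real" where
  "K_term \<phi> k = real k / conj_inv \<phi> (32 ^ (2 ^ k))"

text \<open>K_phi = sum over k \<ge> 1 (index shifted by one).\<close>
definition K_phi :: "(real \<Rightarrow> real) \<Rightarrow> real" where
  "K_phi \<phi> = (\<Sum>k. K_term \<phi> (Suc k))"

definition Phi :: "real \<Rightarrow> real" where
  "Phi x = x * ln (exp 1 + x)"

text \<open>Luxemburg average with respect to mu (value infinity if the defining set is empty).\<close>
definition lux :: "real \<Rightarrow> (real \<Rightarrow> real) \<Rightarrow> (real \<Rightarrow> real) \<Rightarrow> real set \<Rightarrow> ennreal" where
  "lux lam \<psi> g Q = Inf {ennreal \<gamma> | \<gamma>. \<gamma> > 0 \<and>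
      (1 / emeasure (mu lam) Q) * (\<integral>\<^sup>+ x\<in>Q. ennreal (\<psi> (\<bar>g x\<bar> / \<gamma>)) \<partial>mu lam) \<le> 1}"

definition M_young :: "real \<Rightarrow> (real \<Rightarrow> real) \<Rightarrow> (real \<Rightarrow> real) \<Rightarrow> real \<Rightarrow> ennreal" where
  "M_young lam \<phi> g x = (SUP B\<in>{B. \<exists>a b. 0 \<le> a \<and> a < b \<and> B = {a<..<b} \<and> x \<in> B}. lux lam \<phi> g B)"

definition A_LlogL :: "real \<Rightarrow> real set set \<Rightarrow> (real \<Rightarrow> real) \<Rightarrow> real \<Rightarrow> ennreal" where
  "A_LlogL lam S f x = (SUP F\<in>{F. finite F \<and> F \<subseteq> S}. \<Sum>Q\<in>F. lux lam Phi f Q * indicator Q x)"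

definition wmeas :: "(real \<Rightarrow> real) \<Rightarrow> real set \<Rightarrow> ennreal" where
  "wmeas w E = (\<integral>\<^sup>+ x\<in>E. ennreal (w x) \<partial>lborel)"

definition loc_int :: "(real \<Rightarrow> real) \<Rightarrow> bool" where
  "loc_int w \<longleftrightarrow> w \<in> borel_measurable borel \<and>
     (\<forall>a b. 0 < a \<longrightarrow> a \<le> b \<longrightarrow> set_integrable lborel {a..b} w)"

end

theory Submission
  imports Defs
begin

lemma sets_mu[simp, measurable_cong]: "sets (mu lam) = sets borel"
  by (simp add: mu_def)

lemma space_mu[simp]: "space (mu lam) = UNIV"
  by (simp add: mu_def)

lemma measurable_mu_iff[simp]: "measurable (mu lam) N = measurable borel N"
  by (simp add: measurable_def)

lemma mu_density_meas: "(\<lambda>x. ennreal (indicator {0<..} x * x powr (2 * lam))) \<in> borel_measurable borel"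
  by measurable

lemma emeasure_mu: "A \<in> sets borel \<Longrightarrow> emeasure (mu lam) A = (\<integral>\<^sup>+x\<in>A. ennreal (indicator {0<..} x * x powr (2 * lam)) \<partial>lborel)"
  unfolding mu_def by (subst emeasure_density) auto

lemma nn_integral_mu: "g \<in> borel_measurable borel \<Longrightarrow>
  (\<integral>\<^sup>+x. g x \<partial>mu lam) = (\<integral>\<^sup>+x. ennreal (indicator {0<..} x * x powr (2 * lam)) * g x \<partial>lborel)"
  unfolding mu_def by (subst nn_integral_density) auto

lemma dyadic_Ioc: "Q \<in> dyadic \<Longrightarrow> \<exists>a b. 0 \<le> a \<and> a < b \<and> Q = {a<..b}"
proof -
  assume "Q \<in> dyadic"
  then obtain k :: nat and j :: int where Q: "Q = {real k * 2 powr j <.. (real k + 1) * 2 powr j}"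
    unfolding dyadic_def by blast
  have "real k * 2 powr j < (real k + 1) * 2 powr j" by (simp add: distrib_right)
  then show ?thesis using Q by (intro exI[of _ "real k * 2 powr j"] exI[of _ "(real k + 1) * 2 powr j"]) auto
qed

lemma mu_Ioc_fin:
  assumes "0 \<le> a" "a < b" "lam > 0"
  shows "emeasure (mu lam) {a<..b} < \<infinity>"
proof -
  have "emeasure (mu lam) {a<..b} = (\<integral>\<^sup>+x. ennreal (indicator {0<..} x * x powr (2 * lam)) * indicator {a<..b} x \<partial>lborel)"
    by (simp add: emeasure_mu)
  also have "\<dots> \<le> (\<integral>\<^sup>+x. ennreal (b powr (2*lam)) * indicator {a<..b} x \<partial>lborel)"
  proof (rule nn_integral_mono)
    fix x show "ennreal (indicator {0<..} x * x powr (2 * lam)) * indicator {a<..b} x \<le> ennreal (b powr (2*lam)) * indicator {a<..b} x"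
      using assms by (auto simp: indicator_def intro!: ennreal_leI powr_mono2)
  qed
  also have "\<dots> = ennreal (b powr (2*lam)) * ennreal (b - a)"
    using assms by (simp add: nn_integral_cmult_indicator)
  also have "\<dots> < \<infinity>" by (simp add: ennreal_mult_less_top)
  finally show ?thesis .
qed

lemma mu_Ioc_pos:
  assumes "0 \<le> a" "a < b" "lam > 0"
  shows "0 < emeasure (mu lam) {a<..b}"
proof -
  define c where "c = (a+b)/2"
  have c: "0 < c" "a < c" "c < b" using assms by (auto simp: c_def)
  have "0 < ennreal (c powr (2*lam)) * ennreal (b - c)"
    using c by (simp add: ennreal_zero_less_mult_iff)
  also have "ennreal (c powr (2*lam)) * ennreal (b - c) = (\<integral>\<^sup>+x. ennreal (c powr (2*lam)) * indicator {c<..b} x \<partial>lborel)"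
    using c by (simp add: nn_integral_cmult_indicator)
  also have "\<dots> \<le> (\<integral>\<^sup>+x. ennreal (indicator {0<..} x * x powr (2 * lam)) * indicator {a<..b} x \<partial>lborel)"
  proof (rule nn_integral_mono)
    fix x show "ennreal (c powr (2*lam)) * indicator {c<..b} x \<le> ennreal (indicator {0<..} x * x powr (2 * lam)) * indicator {a<..b} x"
      using assms c by (auto simp: indicator_def intro!: ennreal_leI powr_mono2)
  qed
  also have "\<dots> = emeasure (mu lam) {a<..b}"
    by (simp add: emeasure_mu)
  finally show ?thesis .
qed

lemma mu_dens_meas': "(\<lambda>x. ennreal (indicator {0<..} x * x powr (2 * lam))) \<in> borel_measurable lborel"
  by measurable

lemma AE_mu_iff: "(AE x in mu lam. P x) \<longleftrightarrow> (AE x in lborel. 0 < ennreal (indicator {0<..} x * x powr (2 * lam)) \<longrightarrow> P x)"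
  unfolding mu_def by (rule AE_density[OF mu_dens_meas'])

lemma mu_singleton[simp]: "emeasure (mu lam) {b} = 0"
  by (simp add: emeasure_mu nn_integral_null_set finite_imp_null_set_lborel)

lemma AE_mu_pos: "AE x in mu lam. 0 < x"
  unfolding AE_mu_iff by (rule AE_I2) (auto simp: indicator_def split: if_splits)

lemma AE_mu_finite: "finite A \<Longrightarrow> AE x in mu lam. x \<notin> A"
proof -
  assume "finite A"
  from AE_not_in[OF finite_imp_null_set_lborel[OF this]] show ?thesis
    unfolding AE_mu_iff by (rule eventually_mono) auto
qed

lemma dyadic_nested_aux:
  fixes k k' :: nat and j j' :: int
  assumes jj: "j \<le> j'"
    and x1: "real k * 2 powr j < x" "x \<le> (real k + 1) * 2 powr j"
    and x2: "real k' * 2 powr j' < x" "x \<le> (real k' + 1) * 2 powr j'"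
  shows "{real k * 2 powr j <.. (real k + 1) * 2 powr j} \<subseteq> {real k' * 2 powr j' <.. (real k' + 1) * 2 powr j'}"
proof -
  define d where "d = nat (j' - j)"
  define N :: nat where "N = 2 ^ d"
  define u where "u = 2 powr j"
  have u: "u > 0" by (simp add: u_def)
  have "2 powr j' = 2 powr (real_of_int (j' - j) + j)" by simp
  also have "\<dots> = 2 powr (real_of_int (j' - j)) * u" unfolding u_def by (rule powr_add)
  also have "2 powr (real_of_int (j' - j)) = real N"
    using jj by (simp add: N_def d_def powr_realpow[symmetric])
  finally have pj: "2 powr j' = real N * u" .
  have "real k * u < (real k' + 1) * real N * u" using x1 x2 by (simp add: pj u_def[symmetric] mult.assoc)
  then have "real k < (real k' + 1) * real N" using u by simp
  then have "k < (k' + 1) * N" by (metis of_nat_1 of_nat_add of_nat_less_iff of_nat_mult)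
  then have h1: "k + 1 \<le> (k' + 1) * N" by simp
  have "real k' * real N * u < (real k + 1) * u" using x1 x2 by (simp add: pj u_def[symmetric] mult.assoc)
  then have "real k' * real N < real k + 1" using u by simp
  then have "k' * N < k + 1" by (metis of_nat_1 of_nat_add of_nat_less_iff of_nat_mult)
  then have h2: "k' * N \<le> k" by simp
  have h1': "real k + 1 \<le> (real k' + 1) * real N" using h1 by (metis of_nat_1 of_nat_add of_nat_le_iff of_nat_mult)
  have h2': "real k' * real N \<le> real k" using h2 by (metis of_nat_le_iff of_nat_mult)
  show ?thesis
  proof
    fix y assume y: "y \<in> {real k * 2 powr j <.. (real k + 1) * 2 powr j}"
    have "real k' * 2 powr j' = real k' * real N * u" by (simp add: pj)
    also have "\<dots> \<le> real k * u" using h2' u by (simp add: mult_right_mono)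
    also have "\<dots> < y" using y by (simp add: u_def)
    finally have a: "real k' * 2 powr j' < y" .
    have "y \<le> (real k + 1) * u" using y by (simp add: u_def)
    also have "\<dots> \<le> (real k' + 1) * real N * u" using h1' u by (simp add: mult_right_mono)
    also have "\<dots> = (real k' + 1) * 2 powr j'" by (simp add: pj)
    finally show "y \<in> {real k' * 2 powr j' <.. (real k' + 1) * 2 powr j'}" using a by simp
  qed
qed

lemma dyadic_nested:
  assumes "Q \<in> dyadic" "Q' \<in> dyadic" "Q \<inter> Q' \<noteq> {}"
  shows "Q \<subseteq> Q' \<or> Q' \<subseteq> Q"
proof -
  obtain k :: nat and j :: int where Q: "Q = {real k * 2 powr j <.. (real k + 1) * 2 powr j}"
    using assms(1) unfolding dyadic_def by blast
  obtain k' :: nat and j' :: int where Q': "Q' = {real k' * 2 powr j' <.. (real k' + 1) * 2 powr j'}"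
    using assms(2) unfolding dyadic_def by blast
  obtain x where x: "x \<in> Q" "x \<in> Q'" using assms(3) by blast
  show ?thesis
  proof (cases "j \<le> j'")
    case True
    then show ?thesis using dyadic_nested_aux[OF True, of k x k'] x Q Q' by auto
  next
    case False
    then have jj: "j' \<le> j" by simp
    show ?thesis using dyadic_nested_aux[OF jj, of k' x k] x Q Q' by auto
  qed
qed

lemma dyadic_sets: "Q \<in> dyadic \<Longrightarrow> Q \<in> sets borel"
  using dyadic_Ioc by fastforce

definition cset :: "(real \<Rightarrow> real) \<Rightarrow> real \<Rightarrow> real set" where
  "cset \<phi> s = {r. 0 \<le> r \<and> young_conj \<phi> r \<le> ereal s}"

lemma yc_le_iff: "young_conj \<phi> r \<le> ereal s \<longleftrightarrow> (\<forall>t>0. r * t - \<phi> t \<le> s)"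
  unfolding young_conj_def by (auto simp: SUP_le_iff)

lemma conj_inv_cset: "conj_inv \<phi> s = Sup (cset \<phi> s)"
  unfolding conj_inv_def cset_def ..

lemma cset_iff: "r \<in> cset \<phi> s \<longleftrightarrow> 0 \<le> r \<and> (\<forall>t>0. r * t - \<phi> t \<le> s)"
  unfolding cset_def by (simp add: yc_le_iff)

context
  fixes \<phi> :: "real \<Rightarrow> real"
  assumes yg: "young \<phi>"
begin

lemma yg_nonneg: "t \<ge> 0 \<Longrightarrow> \<phi> t \<ge> 0" using yg unfolding young_def by auto
lemma yg_zero: "\<phi> 0 = 0" using yg unfolding young_def by auto
lemma yg_convex: "convex_on {0..} \<phi>" using yg unfolding young_def by auto
lemma yg_lim: "filterlim \<phi> at_top at_top" using yg unfolding young_def by auto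

lemma cset_0: "s \<ge> 0 \<Longrightarrow> 0 \<in> cset \<phi> s"
proof -
  assume s: "s \<ge> 0"
  have "0 * t - \<phi> t \<le> s" if "t > 0" for t using yg_nonneg[of t] that s by simp
  then show ?thesis unfolding cset_iff by simp
qed

lemma cset_bound: "r \<in> cset \<phi> s \<Longrightarrow> r \<le> s + \<phi> 1"
  unfolding cset_iff by (auto dest: spec[of _ 1])

lemma cset_bdd: "bdd_above (cset \<phi> s)"
  by (rule bdd_aboveI[of _ "s + \<phi> 1"]) (rule cset_bound)

lemma cset_ne: "s \<ge> 0 \<Longrightarrow> cset \<phi> s \<noteq> {}"
  using cset_0 by auto

lemma cinv_upper: "r \<in> cset \<phi> s \<Longrightarrow> r \<le> conj_inv \<phi> s"
  unfolding conj_inv_cset by (rule cSup_upper[OF _ cset_bdd])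

lemma cinv_nonneg: "s \<ge> 0 \<Longrightarrow> 0 \<le> conj_inv \<phi> s"
  using cinv_upper[OF cset_0] .

lemma young_ineq:
  assumes "r \<in> cset \<phi> s" "u \<ge> 0" "s \<ge> 0"
  shows "r * u \<le> \<phi> u + s"
proof (cases "u = 0")
  case True then show ?thesis using assms yg_zero by simp
next
  case False
  then have "u > 0" using assms by simp
  moreover have "\<forall>t>0. r * t - \<phi> t \<le> s" using assms unfolding cset_iff by simp
  ultimately have "r * u - \<phi> u \<le> s" by blast
  then show ?thesis by simp
qed

lemma cinv_mono:
  assumes "0 \<le> s" "s \<le> s'"
  shows "conj_inv \<phi> s \<le> conj_inv \<phi> s'"
  unfolding conj_inv_cset
proof (rule cSup_subset_mono)
  show "cset \<phi> s \<noteq> {}" using cset_ne assms by simp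
  show "bdd_above (cset \<phi> s')" by (rule cset_bdd)
  show "cset \<phi> s \<subseteq> cset \<phi> s'"
  proof
    fix x assume "x \<in> cset \<phi> s"
    then have "0 \<le> x" "\<And>t. t > 0 \<Longrightarrow> x * t - \<phi> t \<le> s" unfolding cset_iff by auto
    then show "x \<in> cset \<phi> s'" unfolding cset_iff using assms by (auto intro: order_trans)
  qed
qed

lemma cinv_scale:
  assumes "a \<ge> 1" "s \<ge> 0"
  shows "conj_inv \<phi> (a * s) \<le> a * conj_inv \<phi> s"
proof -
  have "r \<le> a * conj_inv \<phi> s" if r: "r \<in> cset \<phi> (a * s)" for r
  proof -
    have "r / a \<in> cset \<phi> s"
      unfolding cset_iff
    proof (intro conjI allI impI)
      show "0 \<le> r / a" using r assms unfolding cset_iff by simp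
      fix t :: real assume t: "t > 0"
      have h: "r * t - \<phi> t \<le> a * s" using r t unfolding cset_iff by auto
      have p: "\<phi> t \<ge> 0" using yg_nonneg t by simp
      have "0 \<le> (a - 1) * \<phi> t" using p assms by simp
      then have "\<phi> t / a \<le> \<phi> t" using assms by (simp add: field_simps algebra_simps)
      then have "r / a * t - \<phi> t \<le> r / a * t - \<phi> t / a" by simp
      also have "\<dots> = (r * t - \<phi> t) / a" using assms by (simp add: field_simps)
      also have "\<dots> \<le> s" using h assms by (simp add: divide_le_eq algebra_simps)
      finally show "r / a * t - \<phi> t \<le> s" .
    qed
    then have "r / a \<le> conj_inv \<phi> s" by (rule cinv_upper)
    then show ?thesis using assms by (simp add: field_simps)
  qed
  moreover have "cset \<phi> (a * s) \<noteq> {}" using cset_ne assms by simp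
  ultimately show ?thesis unfolding conj_inv_cset by (intro cSup_least) auto
qed

lemma cinv_pos:
  assumes "s > 0"
  shows "conj_inv \<phi> s > 0"
proof -
  obtain T where T: "\<And>t. t \<ge> T \<Longrightarrow> \<phi> t \<ge> 1"
    using yg_lim unfolding filterlim_at_top eventually_at_top_linorder by blast
  define t0 where "t0 = max T 1"
  have t0: "t0 > 0" "\<phi> t0 \<ge> 1" using T by (auto simp: t0_def)
  have grow: "\<phi> t \<ge> t / t0" if "t \<ge> t0" for t
  proof -
    have tp: "t > 0" using that t0 by simp
    have "\<phi> ((1 - t0/t) *\<^sub>R 0 + (t0/t) *\<^sub>R t) \<le> (1 - t0/t) * \<phi> 0 + (t0/t) * \<phi> t"
      using tp that t0 by (intro convex_onD[OF yg_convex]) auto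
    then have "\<phi> t0 \<le> (t0/t) * \<phi> t" using tp yg_zero by simp
    then have "1 \<le> (t0/t) * \<phi> t" using t0 by simp
    then show ?thesis using tp t0 by (simp add: field_simps)
  qed
  define r where "r = min (1/t0) (s/t0)"
  have rpos: "r > 0" using t0 assms by (simp add: r_def)
  have "r \<in> cset \<phi> s"
    unfolding cset_iff
  proof (intro conjI allI impI)
    show "0 \<le> r" using rpos by simp
    fix t :: real assume t: "t > 0"
    show "r * t - \<phi> t \<le> s"
    proof (cases "t \<ge> t0")
      case True
      have "r * t \<le> (1/t0) * t" using t by (intro mult_right_mono) (auto simp: r_def)
      also have "\<dots> \<le> \<phi> t" using grow[OF True] by simp
      finally show ?thesis using assms by simp
    next
      case False
      have "r * t \<le> (s/t0) * t0" using t False rpos by (intro mult_mono) (auto simp: r_def)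
      also have "\<dots> = s" using t0 by simp
      finally show ?thesis using yg_nonneg[of t] t by simp
    qed
  qed
  then have "r \<le> conj_inv \<phi> s" by (rule cinv_upper)
  then show ?thesis using rpos by simp
qed

end

lemma ennreal_cSup_eq:
  fixes C :: "real set"
  assumes "C \<noteq> {}" "bdd_above C"
  shows "ennreal (Sup C) = (SUP r\<in>C. ennreal r)"
proof (rule antisym)
  show "(SUP r\<in>C. ennreal r) \<le> ennreal (Sup C)"
    using assms by (intro SUP_least ennreal_leI cSup_upper) auto
  show "ennreal (Sup C) \<le> (SUP r\<in>C. ennreal r)"
  proof (cases "(SUP r\<in>C. ennreal r) = top")
    case True then show ?thesis by (metis top_greatest)
  next
    case False
    then obtain s where s: "(SUP r\<in>C. ennreal r) = ennreal s" "s \<ge> 0"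
      using ennreal_cases[of "SUP r\<in>C. ennreal r"] by auto
    have "r \<le> s" if "r \<in> C" for r
    proof -
      have "ennreal r \<le> ennreal s" using that s by (metis SUP_upper)
      then show ?thesis using s by (cases "r \<ge> 0") (auto simp: ennreal_le_iff)
    qed
    then have "Sup C \<le> s" using assms by (intro cSup_least) auto
    then show ?thesis using s by (simp add: ennreal_leI)
  qed
qed

lemma ennreal_Sup_mult_le:
  fixes C :: "real set" and c B :: ennreal
  assumes "C \<noteq> {}" "bdd_above C" "\<And>r. r \<in> C \<Longrightarrow> c * ennreal r \<le> B"
  shows "c * ennreal (Sup C) \<le> B"
  unfolding ennreal_cSup_eq[OF assms(1,2)] SUP_mult_left_ennreal
  using assms(3) by (intro SUP_least) auto

lemma ennreal_Inf_mult_le: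
  fixes K X :: ennreal
  assumes "0 < K" "K < top" "\<And>g. g \<in> G \<Longrightarrow> X \<le> K * g"
  shows "X \<le> K * Inf G"
proof -
  have "X / K \<le> Inf G"
    using assms by (intro Inf_greatest divide_le_posI_ennreal) auto
  then have "X / K * K \<le> Inf G * K" by (rule mult_right_mono) simp
  moreover have "X / K * K = X"
    using assms by (simp add: ennreal_divide_times ennreal_divide_self)
  ultimately show ?thesis by (simp add: mult.commute)
qed

lemma ennreal_avg_le_1_iff:
  fixes m I :: ennreal
  assumes "0 < m" "m < top"
  shows "1 / m * I \<le> 1 \<longleftrightarrow> I \<le> m"
proof
  assume h: "1 / m * I \<le> 1"
  have "1 / m * I * m = 1 / m * (I * m)" by (simp add: mult.assoc)
  also have "\<dots> = 1 * ((I * m) / m)" by (rule ennreal_divide_times)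
  also have "\<dots> = I" using assms mult_divide_eq_ennreal[of m I] by simp
  finally have "I = 1 / m * I * m" by simp
  also have "\<dots> \<le> 1 * m" using h by (rule mult_right_mono) simp
  finally show "I \<le> m" by simp
next
  assume h: "I \<le> m"
  have "1 / m * I = I / m" by (metis ennreal_times_divide mult.commute mult.right_neutral)
  also have "\<dots> \<le> m / m" using h by (rule divide_right_mono_ennreal)
  also have "\<dots> = 1" using assms by simp
  finally show "1 / m * I \<le> 1" .
qed

lemma mu_dyadic:
  assumes "P \<in> dyadic" "lam > 0"
  shows "0 < emeasure (mu lam) P" "emeasure (mu lam) P < top"
  using dyadic_Ioc[OF assms(1)] mu_Ioc_pos mu_Ioc_fin assms(2) by auto

lemma dyadic_pos: "P \<in> dyadic \<Longrightarrow> x \<in> P \<Longrightarrow> 0 < x"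
  using dyadic_Ioc by fastforce

lemma lux_le:
  assumes "\<gamma> > 0" "(1 / emeasure (mu lam) Q) * (\<integral>\<^sup>+ x\<in>Q. ennreal (\<psi> (\<bar>g x\<bar> / \<gamma>)) \<partial>mu lam) \<le> 1"
  shows "lux lam \<psi> g Q \<le> ennreal \<gamma>"
  unfolding lux_def using assms by (intro Inf_lower) auto

lemma lux_gt_imp:
  assumes "Q \<in> dyadic" "lam > 0" "\<gamma> > 0" "ennreal \<gamma> < lux lam \<psi> g Q"
  shows "emeasure (mu lam) Q < (\<integral>\<^sup>+ x\<in>Q. ennreal (\<psi> (\<bar>g x\<bar> / \<gamma>)) \<partial>mu lam)"
proof (rule ccontr)
  assume "\<not> ?thesis"
  then have "(\<integral>\<^sup>+ x\<in>Q. ennreal (\<psi> (\<bar>g x\<bar> / \<gamma>)) \<partial>mu lam) \<le> emeasure (mu lam) Q" by simp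
  then have "(1 / emeasure (mu lam) Q) * (\<integral>\<^sup>+ x\<in>Q. ennreal (\<psi> (\<bar>g x\<bar> / \<gamma>)) \<partial>mu lam) \<le> 1"
    using ennreal_avg_le_1_iff mu_dyadic assms by blast
  then have "lux lam \<psi> g Q \<le> ennreal \<gamma>" using assms by (intro lux_le) auto
  then show False using assms by simp
qed

lemma young_meas:
  assumes "young \<phi>" "v \<in> borel_measurable borel" "\<gamma> > 0"
  shows "(\<lambda>x. \<phi> (\<bar>v x\<bar> / \<gamma>)) \<in> borel_measurable borel"
proof -
  define \<phi>' where "\<phi>' t = \<phi> (max t 0)" for t
  have "mono \<phi>'"
  proof
    fix x y :: real assume "x \<le> y"
    then show "\<phi>' x \<le> \<phi>' y" using assms(1) unfolding young_def \<phi>'_def mono_on_def by auto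
  qed
  then have m: "\<phi>' \<in> borel_measurable borel" by (rule borel_measurable_mono)
  have "(\<lambda>x. \<phi>' (\<bar>v x\<bar> / \<gamma>)) \<in> borel_measurable borel"
    using m assms(2) by measurable
  moreover have "(\<lambda>x. \<phi>' (\<bar>v x\<bar> / \<gamma>)) = (\<lambda>x. \<phi> (\<bar>v x\<bar> / \<gamma>))"
  proof
    fix x
    have "0 \<le> \<bar>v x\<bar> / \<gamma>" using assms(3) by simp
    then show "\<phi>' (\<bar>v x\<bar> / \<gamma>) = \<phi> (\<bar>v x\<bar> / \<gamma>)" by (simp add: \<phi>'_def max_absorb1)
  qed
  ultimately show ?thesis by simp
qed

lemma holder:
  fixes v :: "real \<Rightarrow> real"
  assumes yg: "young \<phi>" and lam: "lam > 0" and P: "P \<in> dyadic"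
    and D: "D \<in> sets borel" "D \<subseteq> P" and s: "s \<ge> 0"
    and sD: "ennreal s * emeasure (mu lam) D \<le> emeasure (mu lam) P"
    and vm: "v \<in> borel_measurable borel" and vpos: "\<And>x. x > 0 \<Longrightarrow> 0 \<le> v x"
  shows "(\<integral>\<^sup>+x\<in>D. ennreal (v x) \<partial>mu lam) * ennreal (conj_inv \<phi> s) \<le> 2 * emeasure (mu lam) P * lux lam \<phi> v P"
proof -
  define I where "I = (\<integral>\<^sup>+x\<in>D. ennreal (v x) \<partial>mu lam)"
  have mP: "0 < emeasure (mu lam) P" "emeasure (mu lam) P < top" using mu_dyadic P lam by auto
  have Pm: "P \<in> sets borel" using P by (rule dyadic_sets)
  note [measurable] = vm D(1) Pm
  have step1: "I * ennreal r \<le> 2 * emeasure (mu lam) P * ennreal \<gamma>"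
    if g: "\<gamma> > 0" and adm: "(1 / emeasure (mu lam) P) * (\<integral>\<^sup>+ x\<in>P. ennreal (\<phi> (\<bar>v x\<bar> / \<gamma>)) \<partial>mu lam) \<le> 1"
    and r: "r \<in> cset \<phi> s" for \<gamma> r
  proof -
    have adm': "(\<integral>\<^sup>+ x\<in>P. ennreal (\<phi> (\<bar>v x\<bar> / \<gamma>)) \<partial>mu lam) \<le> emeasure (mu lam) P"
      using adm ennreal_avg_le_1_iff[OF mP] by simp
    have pw: "ennreal (v x) * indicator D x * ennreal r \<le> ennreal \<gamma> * (ennreal (\<phi> (\<bar>v x\<bar> / \<gamma>)) * indicator P x + ennreal s * indicator D x)" for x
    proof (cases "x \<in> D")
      case True
      then have xP: "x \<in> P" using D by auto
      then have x0: "0 < x" using P dyadic_pos by blast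
      have v0: "0 \<le> v x" using vpos x0 by simp
      have ph0: "0 \<le> \<phi> (\<bar>v x\<bar> / \<gamma>)" using yg_nonneg[OF yg] g by simp
      have "r * (v x / \<gamma>) \<le> \<phi> (v x / \<gamma>) + s"
        by (rule young_ineq[OF yg r]) (use v0 g s in auto)
      then have "v x * r \<le> \<gamma> * (\<phi> (\<bar>v x\<bar> / \<gamma>) + s)"
        using g v0 by (simp add: field_simps)
      then have "ennreal (v x * r) \<le> ennreal (\<gamma> * (\<phi> (\<bar>v x\<bar> / \<gamma>) + s))" by (rule ennreal_leI)
      then show ?thesis using True xP v0 g ph0 s r
        by (simp add: ennreal_mult ennreal_plus cset_iff)
    next
      case False then show ?thesis by simp
    qed
    have "I * ennreal r = (\<integral>\<^sup>+x. ennreal (v x) * indicator D x * ennreal r \<partial>mu lam)"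
      unfolding I_def by (rule nn_integral_multc[symmetric]) measurable
    also have "\<dots> \<le> (\<integral>\<^sup>+x. ennreal \<gamma> * (ennreal (\<phi> (\<bar>v x\<bar> / \<gamma>)) * indicator P x + ennreal s * indicator D x) \<partial>mu lam)"
      by (rule nn_integral_mono) (rule pw)
    also have "\<dots> = ennreal \<gamma> * ((\<integral>\<^sup>+x. ennreal (\<phi> (\<bar>v x\<bar> / \<gamma>)) * indicator P x \<partial>mu lam) + (\<integral>\<^sup>+x. ennreal s * indicator D x \<partial>mu lam))"
      using young_meas[OF yg vm g] Pm D
      by (subst nn_integral_cmult) (auto intro!: arg_cong2[where f="(*)"] nn_integral_add)
    also have "(\<integral>\<^sup>+x. ennreal s * indicator D x \<partial>mu lam) = ennreal s * emeasure (mu lam) D"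
      using D by (simp add: nn_integral_cmult_indicator)
    also have "ennreal \<gamma> * ((\<integral>\<^sup>+x. ennreal (\<phi> (\<bar>v x\<bar> / \<gamma>)) * indicator P x \<partial>mu lam) + ennreal s * emeasure (mu lam) D)
        \<le> ennreal \<gamma> * (emeasure (mu lam) P + emeasure (mu lam) P)"
      using adm' sD by (intro mult_left_mono add_mono) auto
    also have "\<dots> = 2 * emeasure (mu lam) P * ennreal \<gamma>"
      by (simp add: mult_2 algebra_simps)
    finally show ?thesis .
  qed
  have step2: "I * ennreal (conj_inv \<phi> s) \<le> 2 * emeasure (mu lam) P * ennreal \<gamma>"
    if g: "\<gamma> > 0" and adm: "(1 / emeasure (mu lam) P) * (\<integral>\<^sup>+ x\<in>P. ennreal (\<phi> (\<bar>v x\<bar> / \<gamma>)) \<partial>mu lam) \<le> 1" for \<gamma>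
    unfolding conj_inv_cset
    using cset_ne[OF yg s] cset_bdd[OF yg] step1[OF g adm]
    by (intro ennreal_Sup_mult_le) auto
  have "I * ennreal (conj_inv \<phi> s) \<le> 2 * emeasure (mu lam) P * lux lam \<phi> v P"
    unfolding lux_def
    using mP step2 by (intro ennreal_Inf_mult_le) (auto simp: ennreal_mult_less_top ennreal_zero_less_mult_iff)
  then show ?thesis unfolding I_def .
qed

lemma finite_Union_sets: "finite G \<Longrightarrow> G \<subseteq> dyadic \<Longrightarrow> \<Union>G \<in> sets borel"
  using dyadic_sets by (intro sets.finite_Union) auto

lemma union_le:
  assumes "finite G" "G \<subseteq> dyadic" "sets N1 = sets borel" "sets N2 = sets borel"
    "\<And>Q. Q \<in> G \<Longrightarrow> emeasure N1 Q \<le> emeasure N2 Q"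
  shows "emeasure N1 (\<Union>G) \<le> emeasure N2 (\<Union>G)"
  using assms
proof (induction "card G" arbitrary: G rule: less_induct)
  case less
  show ?case
  proof (cases "G = {}")
    case True then show ?thesis by simp
  next
    case False
    obtain Q where Q: "Q \<in> G" "\<And>R. R \<in> G \<Longrightarrow> Q \<le> R \<Longrightarrow> Q = R"
      using finite_has_maximal[OF less.prems(1) False] by blast
    define G' where "G' = {R\<in>G. R \<inter> Q = {}}"
    have G'sub: "G' \<subseteq> G" by (auto simp: G'_def)
    have fin': "finite G'" using less.prems(1) G'sub by (rule finite_subset[rotated])
    have QnG': "Q \<notin> G'"
    proof
      assume "Q \<in> G'"
      then have "Q = {}" by (auto simp: G'_def)
      moreover have "Q \<noteq> {}" using less.prems(2) Q(1) dyadic_Ioc by fastforce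
      ultimately show False by simp
    qed
    have card: "card G' < card G"
      using G'sub QnG' Q(1) less.prems(1) by (intro psubset_card_mono) auto
    have G'd: "G' \<subseteq> dyadic" using less.prems(2) G'sub by auto
    have G'h: "\<And>Q. Q \<in> G' \<Longrightarrow> emeasure N1 Q \<le> emeasure N2 Q" using less.prems(5) G'sub by auto
    have IH: "emeasure N1 (\<Union>G') \<le> emeasure N2 (\<Union>G')"
      by (rule less.hyps[OF card fin' G'd less.prems(3,4) G'h])
    have un: "\<Union>G = Q \<union> \<Union>G'"
    proof
      show "\<Union>G \<subseteq> Q \<union> \<Union>G'"
      proof
        fix x assume "x \<in> \<Union>G"
        then obtain R where R: "R \<in> G" "x \<in> R" by auto
        show "x \<in> Q \<union> \<Union>G'"
        proof (cases "R \<inter> Q = {}")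
          case True then show ?thesis using R by (auto simp: G'_def)
        next
          case False
          then have "R \<subseteq> Q \<or> Q \<subseteq> R" using dyadic_nested less.prems(2) R(1) Q(1) by blast
          then have "R \<subseteq> Q" using Q(2)[OF R(1)] by auto
          then show ?thesis using R by auto
        qed
      qed
      show "Q \<union> \<Union>G' \<subseteq> \<Union>G" using Q(1) G'sub by auto
    qed
    have disj: "Q \<inter> \<Union>G' = {}" by (auto simp: G'_def)
    have mQ: "Q \<in> sets borel" using less.prems(2) Q(1) dyadic_sets by auto
    have mG': "\<Union>G' \<in> sets borel" using fin' G'sub less.prems(2) by (intro finite_Union_sets) auto
    have "emeasure N1 (\<Union>G) = emeasure N1 Q + emeasure N1 (\<Union>G')"
      unfolding un using mQ mG' disj less.prems(3) by (intro plus_emeasure[symmetric]) auto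
    also have "\<dots> \<le> emeasure N2 Q + emeasure N2 (\<Union>G')"
      using less.prems(5)[OF Q(1)] IH by (rule add_mono)
    also have "\<dots> = emeasure N2 (\<Union>G)"
      unfolding un using mQ mG' disj less.prems(4) by (intro plus_emeasure) auto
    finally show ?thesis .
  qed
qed

definition cntP :: "real set set \<Rightarrow> real set \<Rightarrow> real \<Rightarrow> nat" where
  "cntP G P x = card {Q\<in>G. Q \<subseteq> P \<and> x \<in> Q}"

definition cnt :: "real set set \<Rightarrow> real \<Rightarrow> nat" where
  "cnt G x = card {Q\<in>G. x \<in> Q}"

lemma card_filter_sum: "finite H \<Longrightarrow> real (card {Q\<in>H. x \<in> Q}) = (\<Sum>Q\<in>H. indicator Q x)"
proof -
  assume fin: "finite H"
  have "(\<Sum>Q\<in>H. indicator Q x :: real) = (\<Sum>Q\<in>H. if x \<in> Q then 1 else 0)"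
    by (intro sum.cong) (auto simp: indicator_def)
  also have "\<dots> = (\<Sum>Q\<in>{Q\<in>H. x \<in> Q}. 1)" using sum.inter_filter[OF fin, of "\<lambda>_. (1::real)" "\<lambda>Q. x \<in> Q"] by (simp only:)
  also have "\<dots> = real (card {Q\<in>H. x \<in> Q})" by simp
  finally show ?thesis by simp
qed

lemma meas_card_ge:
  assumes "finite H" "H \<subseteq> sets borel"
  shows "{x. m \<le> card {Q\<in>H. x \<in> Q}} \<in> sets borel"
proof -
  have "(\<lambda>x. (\<Sum>Q\<in>H. indicator Q x :: real)) \<in> borel_measurable borel"
    using assms by (intro borel_measurable_sum) auto
  then have "{x. real m \<le> (\<Sum>Q\<in>H. indicator Q x :: real)} \<in> sets borel" by measurable
  moreover have "{x. m \<le> card {Q\<in>H. x \<in> Q}} = {x. real m \<le> (\<Sum>Q\<in>H. indicator Q x :: real)}"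
    by (rule Collect_cong) (metis card_filter_sum[OF assms(1)] of_nat_le_iff)
  ultimately show ?thesis by simp
qed

lemma count_tail:
  assumes "finite G" "G \<subseteq> dyadic"
  shows "cnt G x - L \<le> card {P\<in>G. x \<in> P \<and> L + 1 \<le> cntP G P x}"
proof -
  define C where "C = {Q\<in>G. x \<in> Q}"
  have finC: "finite C" using assms(1) by (auto simp: C_def)
  have cP: "cntP G P x = card {Q\<in>C. Q \<subseteq> P}" for P
    unfolding cntP_def C_def by (rule arg_cong[where f=card]) auto
  define f where "f P = card {Q\<in>C. Q \<subseteq> P}" for P
  have less: "f P < f P'" if "P \<in> C" "P' \<in> C" "P \<subset> P'" for P P'
  proof -
    have "{Q\<in>C. Q \<subseteq> P} \<subset> {Q\<in>C. Q \<subseteq> P'}" using that by auto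
    then show ?thesis unfolding f_def using finC by (intro psubset_card_mono) auto
  qed
  have inj: "inj_on f C"
  proof
    fix P P' assume PP: "P \<in> C" "P' \<in> C" "f P = f P'"
    show "P = P'"
    proof (rule ccontr)
      assume ne: "P \<noteq> P'"
      have "P \<inter> P' \<noteq> {}" using PP by (auto simp: C_def)
      then have "P \<subseteq> P' \<or> P' \<subseteq> P" using dyadic_nested assms(2) PP by (auto simp: C_def)
      then have "P \<subset> P' \<or> P' \<subset> P" using ne by auto
      then show False using less PP by fastforce
    qed
  qed
  have fpos: "1 \<le> f P" if "P \<in> C" for P
  proof -
    have "P \<in> {Q\<in>C. Q \<subseteq> P}" using that by auto
    then have "{Q\<in>C. Q \<subseteq> P} \<noteq> {}" by auto
    then show ?thesis unfolding f_def using finC by (simp add: Suc_le_eq card_gt_0_iff)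
  qed
  have small: "card {P\<in>C. f P \<le> L} \<le> L"
  proof -
    have "card {P\<in>C. f P \<le> L} = card (f ` {P\<in>C. f P \<le> L})"
      using inj by (intro card_image[symmetric]) (auto intro: inj_on_subset)
    also have "\<dots> \<le> card {1..L}"
      using fpos by (intro card_mono) auto
    finally show ?thesis by simp
  qed
  have split: "card C = card {P\<in>C. f P \<le> L} + card {P\<in>C. L + 1 \<le> f P}"
  proof -
    have "C = {P\<in>C. f P \<le> L} \<union> {P\<in>C. L + 1 \<le> f P}" by auto
    moreover have "{P\<in>C. f P \<le> L} \<inter> {P\<in>C. L + 1 \<le> f P} = {}" by auto
    ultimately show ?thesis using finC by (metis (no_types, lifting) card_Un_disjoint finite_Un)
  qed
  have "cnt G x = card C" by (simp add: cnt_def C_def)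
  moreover have "{P\<in>G. x \<in> P \<and> L + 1 \<le> cntP G P x} = {P\<in>C. L + 1 \<le> f P}"
    by (auto simp: C_def cP f_def)
  ultimately show ?thesis using split small by simp
qed

definition spf :: "real \<Rightarrow> real set set \<Rightarrow> (real set \<Rightarrow> real set) \<Rightarrow> bool" where
  "spf lam G E \<longleftrightarrow> finite G \<and> G \<subseteq> dyadic \<and>
     (\<forall>Q\<in>G. E Q \<in> sets borel \<and> E Q \<subseteq> Q \<and> ennreal (31/32) * emeasure (mu lam) Q \<le> emeasure (mu lam) (E Q))
     \<and> disjoint_family_on E G"

lemma enn_mul: "0 \<le> a \<Longrightarrow> 0 \<le> b \<Longrightarrow> ennreal a * (ennreal b * X) = ennreal (a * b) * X"
  by (simp add: ennreal_mult mult.assoc)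

lemma spf_subset: "spf lam G E \<Longrightarrow> G' \<subseteq> G \<Longrightarrow> spf lam G' E"
  unfolding spf_def by (auto intro: finite_subset disjoint_family_on_mono)

lemma cntP_eq: "cntP G P x = card {Q\<in>{Q\<in>G. Q \<subseteq> P}. x \<in> Q}"
  unfolding cntP_def by (rule arg_cong[where f=card]) auto

lemma meas_cntP:
  assumes "finite G" "G \<subseteq> dyadic" "P \<in> sets borel"
  shows "{x\<in>P. m \<le> cntP G P x} \<in> sets borel"
proof -
  have "{x. m \<le> card {Q\<in>{Q\<in>G. Q \<subseteq> P}. x \<in> Q}} \<in> sets borel"
    using assms dyadic_sets by (intro meas_card_ge) auto
  then have "P \<inter> {x. m \<le> card {Q\<in>{Q\<in>G. Q \<subseteq> P}. x \<in> Q}} \<in> sets borel" using assms(3) by auto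
  moreover have "{x\<in>P. m \<le> cntP G P x} = P \<inter> {x. m \<le> card {Q\<in>{Q\<in>G. Q \<subseteq> P}. x \<in> Q}}"
    by (auto simp: cntP_eq)
  ultimately show ?thesis by simp
qed

context
  fixes lam :: real and G :: "real set set" and E :: "real set \<Rightarrow> real set"
  assumes lam: "lam > 0" and sp: "spf lam G E"
begin

lemma sp_fin: "finite G" using sp unfolding spf_def by auto
lemma sp_dy: "G \<subseteq> dyadic" using sp unfolding spf_def by auto
lemma sp_E: "Q \<in> G \<Longrightarrow> E Q \<in> sets borel \<and> E Q \<subseteq> Q \<and> ennreal (31/32) * emeasure (mu lam) Q \<le> emeasure (mu lam) (E Q)"
  using sp unfolding spf_def by auto
lemma sp_disj: "disjoint_family_on E G" using sp unfolding spf_def by auto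

lemma sp_le: "Q \<in> G \<Longrightarrow> emeasure (mu lam) Q \<le> ennreal (32/31) * emeasure (mu lam) (E Q)"
proof -
  assume Q: "Q \<in> G"
  have "emeasure (mu lam) Q = ennreal (32/31) * (ennreal (31/32) * emeasure (mu lam) Q)"
    by (subst enn_mul) auto
  also have "\<dots> \<le> ennreal (32/31) * emeasure (mu lam) (E Q)"
    using sp_E[OF Q] by (intro mult_left_mono) auto
  finally show ?thesis .
qed

lemma sp_sum_le: "H \<subseteq> G \<Longrightarrow> (\<Sum>R\<in>H. emeasure (mu lam) R) \<le> ennreal (32/31) * emeasure (mu lam) (\<Union>R\<in>H. E R)"
proof -
  assume H: "H \<subseteq> G"
  have finH: "finite H" using H sp_fin by (rule finite_subset)
  have "(\<Sum>R\<in>H. emeasure (mu lam) R) \<le> (\<Sum>R\<in>H. ennreal (32/31) * emeasure (mu lam) (E R))"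
    using H sp_le by (intro sum_mono) auto
  also have "\<dots> = ennreal (32/31) * (\<Sum>R\<in>H. emeasure (mu lam) (E R))"
    by (simp add: sum_distrib_left)
  also have "(\<Sum>R\<in>H. emeasure (mu lam) (E R)) = emeasure (mu lam) (\<Union>R\<in>H. E R)"
    using H sp_E sp_disj finH by (intro sum_emeasure) (auto intro: disjoint_family_on_mono)
  finally show ?thesis .
qed

lemma carleson_all: "(\<Sum>P\<in>G. emeasure (mu lam) P) \<le> ennreal (32/31) * emeasure (mu lam) (\<Union>G)"
proof -
  have "(\<Sum>P\<in>G. emeasure (mu lam) P) \<le> ennreal (32/31) * emeasure (mu lam) (\<Union>R\<in>G. E R)"
    by (rule sp_sum_le) simp
  also have "\<dots> \<le> ennreal (32/31) * emeasure (mu lam) (\<Union>G)"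
    using sp_E finite_Union_sets[OF sp_fin sp_dy]
    by (intro mult_left_mono emeasure_mono) auto
  finally show ?thesis .
qed

lemma carleson_sub:
  assumes P: "P \<in> G"
  shows "(\<Sum>R\<in>{R\<in>G. R \<subset> P}. emeasure (mu lam) R) \<le> ennreal (1/31) * emeasure (mu lam) P"
proof -
  define Rs where "Rs = {R\<in>G. R \<subset> P}"
  define U where "U = (\<Union>R\<in>Rs. E R)"
  have finRs: "finite Rs" using sp_fin by (auto simp: Rs_def)
  have Um: "U \<in> sets borel" unfolding U_def using finRs sp_E by (intro sets.finite_UN) (auto simp: Rs_def)
  have EP: "E P \<in> sets borel" "E P \<subseteq> P" "ennreal (31/32) * emeasure (mu lam) P \<le> emeasure (mu lam) (E P)"
    using sp_E[OF P] by auto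
  have Pm: "P \<in> sets borel" using P sp_dy dyadic_sets by auto
  have mP: "emeasure (mu lam) P < top" using P sp_dy mu_dyadic lam by auto
  have disj: "U \<inter> E P = {}"
  proof -
    have "E R \<inter> E P = {}" if "R \<in> Rs" for R
      using sp_disj that P unfolding disjoint_family_on_def Rs_def by auto
    then show ?thesis by (auto simp: U_def)
  qed
  have sub: "U \<union> E P \<subseteq> P" using sp_E EP(2) by (auto simp: U_def Rs_def)
  have "emeasure (mu lam) U + emeasure (mu lam) (E P) = emeasure (mu lam) (U \<union> E P)"
    using Um EP disj by (intro plus_emeasure) auto
  also have "\<dots> \<le> emeasure (mu lam) P" using sub Pm by (intro emeasure_mono) auto
  finally have h: "emeasure (mu lam) U + emeasure (mu lam) (E P) \<le> emeasure (mu lam) P" .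
  have "ennreal (31/32) * emeasure (mu lam) P + emeasure (mu lam) U \<le> emeasure (mu lam) U + emeasure (mu lam) (E P)"
    using EP(3) by (simp add: add.commute add_right_mono)
  also have "\<dots> \<le> emeasure (mu lam) P" by (rule h)
  also have "\<dots> = ennreal (31/32) * emeasure (mu lam) P + ennreal (1/32) * emeasure (mu lam) P"
    by (simp add: distrib_right[symmetric] ennreal_plus[symmetric] del: ennreal_plus)
  finally have "emeasure (mu lam) U \<le> ennreal (1/32) * emeasure (mu lam) P"
    using mP by (subst (asm) ennreal_add_left_cancel_le) (auto simp: ennreal_mult_eq_top_iff)
  have "(\<Sum>R\<in>Rs. emeasure (mu lam) R) \<le> ennreal (32/31) * emeasure (mu lam) U"
    unfolding U_def by (rule sp_sum_le) (auto simp: Rs_def)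
  also have "\<dots> \<le> ennreal (32/31) * (ennreal (1/32) * emeasure (mu lam) P)"
    using \<open>emeasure (mu lam) U \<le> _\<close> by (rule mult_left_mono) simp
  also have "\<dots> = ennreal (1/31) * emeasure (mu lam) P"
    by (subst enn_mul) auto
  finally show ?thesis unfolding Rs_def .
qed

lemma decay_cover:
  assumes P: "P \<in> G" and x: "x \<in> P" and cx: "Suc (Suc j) \<le> cntP G P x"
  shows "\<exists>R\<in>{R\<in>G. R \<subset> P}. x \<in> R \<and> Suc j \<le> cntP G R x"
proof -
  define A where "A = {Q\<in>G. Q \<subseteq> P \<and> x \<in> Q}"
  have finA: "finite A" using sp_fin by (auto simp: A_def)
  have cA: "cntP G P x = card A" by (simp add: cntP_def A_def)
  have "card A \<ge> 2" using cx cA by simp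
  then have "\<exists>Q\<in>A. Q \<noteq> P"
  proof -
    assume c2: "card A \<ge> 2"
    show ?thesis
    proof (rule ccontr)
      assume "\<not> ?thesis"
      then have "A \<subseteq> {P}" by auto
      then have "card A \<le> 1" using card_mono[of "{P}" A] by simp
      then show False using c2 by simp
    qed
  qed
  then obtain Q0 where Q0: "Q0 \<in> A" "Q0 \<noteq> P" by blast
  define B where "B = {R\<in>G. R \<subset> P \<and> x \<in> R}"
  have finB: "finite B" using sp_fin by (auto simp: B_def)
  have Q0B: "Q0 \<in> B" using Q0 by (auto simp: A_def B_def)
  obtain R where R: "R \<in> B" "\<And>R'. R' \<in> B \<Longrightarrow> R \<le> R' \<Longrightarrow> R = R'"
    using finite_has_maximal[OF finB] Q0B by blast
  have RG: "R \<in> G" "R \<subset> P" "x \<in> R" using R(1) by (auto simp: B_def)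
  have "A \<subseteq> insert P {Q\<in>G. Q \<subseteq> R \<and> x \<in> Q}"
  proof
    fix Q assume QA: "Q \<in> A"
    show "Q \<in> insert P {Q\<in>G. Q \<subseteq> R \<and> x \<in> Q}"
    proof (cases "Q = P")
      case True then show ?thesis by simp
    next
      case False
      then have QB: "Q \<in> B" using QA by (auto simp: A_def B_def)
      have "Q \<inter> R \<noteq> {}" using QA RG by (auto simp: A_def)
      then have "Q \<subseteq> R \<or> R \<subseteq> Q" using dyadic_nested sp_dy QB RG by (auto simp: B_def)
      then have "Q \<subseteq> R" using R(2)[OF QB] by auto
      then show ?thesis using QA by (auto simp: A_def)
    qed
  qed
  then have "card A \<le> card (insert P {Q\<in>G. Q \<subseteq> R \<and> x \<in> Q})"
    using sp_fin by (intro card_mono) auto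
  also have "\<dots> \<le> Suc (card {Q\<in>G. Q \<subseteq> R \<and> x \<in> Q})"
    by (rule card_insert_le_m1[of "Suc (card {Q\<in>G. Q \<subseteq> R \<and> x \<in> Q})", simplified]) (use sp_fin in auto)
  finally have "Suc j \<le> cntP G R x" using cx cA by (simp add: cntP_def)
  then show ?thesis using RG by auto
qed

lemma decay:
  assumes P: "P \<in> G"
  shows "emeasure (mu lam) {x\<in>P. Suc j \<le> cntP G P x} \<le> ennreal ((1/31)^j) * emeasure (mu lam) P"
  using P
proof (induction j arbitrary: P)
  case 0
  have Pm: "P \<in> sets borel" using 0 sp_dy dyadic_sets by auto
  have "emeasure (mu lam) {x\<in>P. Suc 0 \<le> cntP G P x} \<le> emeasure (mu lam) P"
    using Pm by (intro emeasure_mono) auto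
  then show ?case by simp
next
  case (Suc j)
  define Rs where "Rs = {R\<in>G. R \<subset> P}"
  have finRs: "finite Rs" using sp_fin by (auto simp: Rs_def)
  have Rm: "\<And>R. R \<in> Rs \<Longrightarrow> {x\<in>R. Suc j \<le> cntP G R x} \<in> sets borel"
    using sp_fin sp_dy dyadic_sets by (intro meas_cntP) (auto simp: Rs_def)
  have "{x\<in>P. Suc (Suc j) \<le> cntP G P x} \<subseteq> (\<Union>R\<in>Rs. {x\<in>R. Suc j \<le> cntP G R x})"
    using decay_cover[OF Suc.prems] by (fastforce simp: Rs_def)
  then have "emeasure (mu lam) {x\<in>P. Suc (Suc j) \<le> cntP G P x} \<le> emeasure (mu lam) (\<Union>R\<in>Rs. {x\<in>R. Suc j \<le> cntP G R x})"
    using Rm finRs by (intro emeasure_mono sets.finite_UN) auto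
  also have "\<dots> \<le> (\<Sum>R\<in>Rs. emeasure (mu lam) {x\<in>R. Suc j \<le> cntP G R x})"
    using Rm finRs by (intro emeasure_subadditive_finite) auto
  also have "\<dots> \<le> (\<Sum>R\<in>Rs. ennreal ((1/31)^j) * emeasure (mu lam) R)"
    using Suc.IH by (intro sum_mono) (auto simp: Rs_def)
  also have "\<dots> = ennreal ((1/31)^j) * (\<Sum>R\<in>Rs. emeasure (mu lam) R)"
    by (simp add: sum_distrib_left)
  also have "\<dots> \<le> ennreal ((1/31)^j) * (ennreal (1/31) * emeasure (mu lam) P)"
    using carleson_sub[OF Suc.prems] by (intro mult_left_mono) (auto simp: Rs_def)
  also have "\<dots> = ennreal ((1/31)^j * (1/31)) * emeasure (mu lam) P"
    by (subst enn_mul) auto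
  also have "(1/31::real)^j * (1/31) = (1/31)^Suc j" by (simp add: power_Suc2)
  finally show ?case .
qed

end

definition Bm :: "real set set \<Rightarrow> (real set \<Rightarrow> ennreal) \<Rightarrow> real \<Rightarrow> ennreal" where
  "Bm G b x = (SUP P\<in>G. b P * indicator P x)"

lemma Bm_meas:
  assumes "finite G" "G \<subseteq> dyadic"
  shows "Bm G b \<in> borel_measurable borel"
  unfolding Bm_def
  using assms dyadic_sets by (intro borel_measurable_SUP) (auto intro: countable_finite)

lemma Bm_ge: "P \<in> G \<Longrightarrow> x \<in> P \<Longrightarrow> b P \<le> Bm G b x"
  unfolding Bm_def by (rule SUP_upper2[of P]) auto

lemma Bm_mono: "G \<subseteq> G' \<Longrightarrow> Bm G b x \<le> Bm G' b x"
  unfolding Bm_def by (rule SUP_subset_mono) auto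

lemma Bm_cong: "(\<And>P. P \<in> G \<Longrightarrow> b P = b' P) \<Longrightarrow> Bm G b = Bm G b'"
  unfolding Bm_def by (intro ext SUP_cong) auto

lemma Bm_pointwise:
  fixes \<beta> :: "real set \<Rightarrow> real"
  assumes P0: "P0 \<in> G" and mn: "\<And>P. P \<in> G \<Longrightarrow> \<beta> P0 \<le> \<beta> P" and nn: "\<And>P. P \<in> G \<Longrightarrow> 0 \<le> \<beta> P"
  shows "Bm (G - {P0}) (\<lambda>P. ennreal (\<beta> P - \<beta> P0)) x + ennreal (\<beta> P0) * indicator (\<Union>G) x
         \<le> Bm G (\<lambda>P. ennreal (\<beta> P)) x"
proof (cases "x \<in> \<Union>G")
  case True
  then obtain P1 where P1: "P1 \<in> G" "x \<in> P1" by auto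
  have star: "ennreal (\<beta> P0) \<le> Bm G (\<lambda>P. ennreal (\<beta> P)) x"
  proof -
    have "ennreal (\<beta> P0) \<le> ennreal (\<beta> P1)" using mn[OF P1(1)] by (rule ennreal_leI)
    also have "\<dots> \<le> Bm G (\<lambda>P. ennreal (\<beta> P)) x" using Bm_ge[OF P1, of "\<lambda>P. ennreal (\<beta> P)"] by simp
    finally show ?thesis .
  qed
  show ?thesis
  proof (cases "G - {P0} = {}")
    case True
    have "Bm (G - {P0}) (\<lambda>P. ennreal (\<beta> P - \<beta> P0)) x = 0" unfolding Bm_def True by (simp add: bot_ennreal)
    then show ?thesis using star \<open>x \<in> \<Union>G\<close> by simp
  next
    case False
    have "Bm (G - {P0}) (\<lambda>P. ennreal (\<beta> P - \<beta> P0)) x + ennreal (\<beta> P0)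
        = (SUP P\<in>G - {P0}. ennreal (\<beta> P - \<beta> P0) * indicator P x + ennreal (\<beta> P0))"
      unfolding Bm_def by (rule ennreal_SUP_add_left[symmetric]) (rule False)
    also have "\<dots> \<le> Bm G (\<lambda>P. ennreal (\<beta> P)) x"
    proof (rule SUP_least)
      fix P assume P: "P \<in> G - {P0}"
      show "ennreal (\<beta> P - \<beta> P0) * indicator P x + ennreal (\<beta> P0) \<le> Bm G (\<lambda>P. ennreal (\<beta> P)) x"
      proof (cases "x \<in> P")
        case True
        have "ennreal (\<beta> P - \<beta> P0) + ennreal (\<beta> P0) = ennreal (\<beta> P)"
          using mn[of P] P nn[OF P0] by (subst ennreal_plus[symmetric]) auto
        then show ?thesis using True Bm_ge[of P G x "\<lambda>P. ennreal (\<beta> P)"] P by simp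
      next
        case False
        then show ?thesis using star by simp
      qed
    qed
    finally show ?thesis using True by simp
  qed
next
  case False
  have "Bm (G - {P0}) (\<lambda>P. ennreal (\<beta> P - \<beta> P0)) x \<le> Bm G (\<lambda>P. ennreal (\<beta> P)) x"
    unfolding Bm_def[of "G - {P0}"] using False by (intro SUP_least) auto
  then show ?thesis using False by simp
qed


lemma carleson_base:
  assumes lam: "lam > 0" and sp: "spf lam G E" and hm: "h \<in> borel_measurable borel" and c: "c \<ge> 0"
    and hyp: "\<And>P. P \<in> G \<Longrightarrow> emeasure (mu lam) P \<le> ennreal c * (\<integral>\<^sup>+x\<in>P. h x \<partial>mu lam)"
  shows "(\<Sum>P\<in>G. emeasure (mu lam) P) \<le> ennreal (32/31*c) * (\<integral>\<^sup>+x. h x * indicator (\<Union>G) x \<partial>mu lam)"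
proof -
  note fin = sp_fin[OF lam sp] and dy = sp_dy[OF lam sp]
  define N2 where "N2 = density (mu lam) (\<lambda>x. ennreal c * h x)"
  have sN2: "sets N2 = sets borel" by (simp add: N2_def)
  have eN2: "emeasure N2 A = ennreal c * (\<integral>\<^sup>+x\<in>A. h x \<partial>mu lam)" if A: "A \<in> sets borel" for A
  proof -
    have "emeasure N2 A = (\<integral>\<^sup>+x\<in>A. ennreal c * h x \<partial>mu lam)"
      unfolding N2_def using hm A by (subst emeasure_density) auto
    also have "\<dots> = ennreal c * (\<integral>\<^sup>+x\<in>A. h x \<partial>mu lam)"
      using hm A by (subst nn_integral_cmult[symmetric]) (auto simp: mult.assoc)
    finally show ?thesis .
  qed
  have UL: "emeasure (mu lam) (\<Union>G) \<le> emeasure N2 (\<Union>G)"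
  proof (rule union_le[OF fin dy])
    show "sets (mu lam) = sets borel" by simp
    show "sets N2 = sets borel" by (rule sN2)
    fix Q assume "Q \<in> G"
    then show "emeasure (mu lam) Q \<le> emeasure N2 Q" using dy dyadic_sets hyp eN2 by auto
  qed
  have "(\<Sum>P\<in>G. emeasure (mu lam) P) \<le> ennreal (32/31) * emeasure (mu lam) (\<Union>G)"
    by (rule carleson_all[OF lam sp])
  also have "\<dots> \<le> ennreal (32/31) * (ennreal c * (\<integral>\<^sup>+x\<in>\<Union>G. h x \<partial>mu lam))"
    using UL eN2[OF finite_Union_sets[OF fin dy]] by (intro mult_left_mono) auto
  also have "\<dots> = ennreal (32/31) * ennreal c * (\<integral>\<^sup>+x. h x * indicator (\<Union>G) x \<partial>mu lam)"
    by (simp only: mult.assoc)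
  also have "ennreal (32/31) * ennreal c = ennreal (32/31*c)"
    using c by (intro ennreal_mult[symmetric]) auto
  finally show ?thesis .
qed

lemma carleson_max:
  assumes lam: "lam > 0" and sp: "spf lam G E" and hm: "h \<in> borel_measurable borel" and c: "c \<ge> 0"
    and hyp: "\<And>P. P \<in> G \<Longrightarrow> emeasure (mu lam) P \<le> ennreal c * (\<integral>\<^sup>+x\<in>P. h x \<partial>mu lam)"
  shows "(\<Sum>P\<in>G. emeasure (mu lam) P * b P) \<le> ennreal (32/31*c) * (\<integral>\<^sup>+x. h x * Bm G b x \<partial>mu lam)"
  using sp hyp
proof (induction "card G" arbitrary: G b rule: less_induct)
  case less
  note spG = less.prems(1) and hypG = less.prems(2)
  note finG = sp_fin[OF lam spG] and dyG = sp_dy[OF lam spG]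
  note [measurable] = hm
  define K where "K = ennreal (32/31*c)"
  show ?case
  proof (cases "G = {}")
    case True then show ?thesis by simp
  next
    case Gne: False
    show ?thesis
    proof (cases "\<exists>P\<in>G. b P = top")
      case True
      then obtain P where P: "P \<in> G" "b P = top" by blast
      have Pm: "P \<in> sets borel" using P dyG dyadic_sets by auto
      have mP: "0 < emeasure (mu lam) P" using mu_dyadic P dyG lam by auto
      have "0 < ennreal c * (\<integral>\<^sup>+x\<in>P. h x \<partial>mu lam)" using mP hypG[OF P(1)] by (rule less_le_trans)
      then have cpos: "c > 0" and ipos: "(\<integral>\<^sup>+x\<in>P. h x \<partial>mu lam) \<noteq> 0"
        by (auto simp: ennreal_zero_less_mult_iff)
      have "top = top * (\<integral>\<^sup>+x\<in>P. h x \<partial>mu lam)" using ipos by simp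
      also have "\<dots> = (\<integral>\<^sup>+x. top * (h x * indicator P x) \<partial>mu lam)"
        using Pm by (subst nn_integral_cmult) auto
      also have "\<dots> \<le> (\<integral>\<^sup>+x. h x * Bm G b x \<partial>mu lam)"
      proof (rule nn_integral_mono)
        fix x
        show "top * (h x * indicator P x) \<le> h x * Bm G b x"
        proof (cases "x \<in> P")
          case True
          then have "Bm G b x = top" using Bm_ge[OF P(1) True, of b] P(2) by (simp add: top_unique)
          then show ?thesis using True by (simp add: mult.commute)
        qed simp
      qed
      finally have "(\<integral>\<^sup>+x. h x * Bm G b x \<partial>mu lam) = top" by (simp add: top_unique)
      then show ?thesis using cpos by simp
    next
      case False
      define \<beta> where "\<beta> P = enn2real (b P)" for P
      have b\<beta>: "b P = ennreal (\<beta> P)" if "P \<in> G" for P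
        using False that by (simp add: \<beta>_def less_top)
      have \<beta>nn: "0 \<le> \<beta> P" for P by (simp add: \<beta>_def)
      define m where "m = Min (\<beta> ` G)"
      have "m \<in> \<beta> ` G" unfolding m_def using finG Gne by (intro Min_in) auto
      then obtain P0 where P0: "P0 \<in> G" "\<beta> P0 = m" by auto
      have mn: "\<And>P. P \<in> G \<Longrightarrow> \<beta> P0 \<le> \<beta> P" using finG P0 by (auto simp: m_def)
      define G' where "G' = G - {P0}"
      define b' where "b' P = ennreal (\<beta> P - \<beta> P0)" for P
      have card: "card G' < card G" using P0 finG unfolding G'_def by (intro psubset_card_mono) auto
      have spG': "spf lam G' E" using spG by (rule spf_subset) (auto simp: G'_def)
      have hypG': "\<And>P. P \<in> G' \<Longrightarrow> emeasure (mu lam) P \<le> ennreal c * (\<integral>\<^sup>+x\<in>P. h x \<partial>mu lam)"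
        using hypG by (auto simp: G'_def)
      have IH: "(\<Sum>P\<in>G'. emeasure (mu lam) P * b' P) \<le> K * (\<integral>\<^sup>+x. h x * Bm G' b' x \<partial>mu lam)"
        unfolding K_def by (rule less.hyps[OF card spG' hypG'])
      have base: "(\<Sum>P\<in>G. emeasure (mu lam) P) \<le> K * (\<integral>\<^sup>+x. h x * indicator (\<Union>G) x \<partial>mu lam)"
        unfolding K_def by (rule carleson_base[OF lam spG hm c hypG])
      have fin': "finite G'" using finG by (simp add: G'_def)
      have dy': "G' \<subseteq> dyadic" using dyG by (auto simp: G'_def)
      have mB': "Bm G' b' \<in> borel_measurable borel" by (rule Bm_meas[OF fin' dy'])
      have mU: "\<Union>G \<in> sets borel" by (rule finite_Union_sets[OF finG dyG])
      have "(\<Sum>P\<in>G. emeasure (mu lam) P * b P) = (\<Sum>P\<in>G. emeasure (mu lam) P * b' P + ennreal (\<beta> P0) * emeasure (mu lam) P)"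
      proof (rule sum.cong)
        fix P assume P: "P \<in> G"
        have "b P = b' P + ennreal (\<beta> P0)"
          using b\<beta>[OF P] mn[OF P] \<beta>nn[of P0] by (simp add: b'_def ennreal_plus[symmetric] del: ennreal_plus)
        then show "emeasure (mu lam) P * b P = emeasure (mu lam) P * b' P + ennreal (\<beta> P0) * emeasure (mu lam) P"
          by (simp add: distrib_left mult.commute)
      qed simp
      also have "\<dots> = (\<Sum>P\<in>G. emeasure (mu lam) P * b' P) + ennreal (\<beta> P0) * (\<Sum>P\<in>G. emeasure (mu lam) P)"
        by (simp add: sum.distrib sum_distrib_left)
      also have "(\<Sum>P\<in>G. emeasure (mu lam) P * b' P) = (\<Sum>P\<in>G'. emeasure (mu lam) P * b' P)"
        using finG P0 by (simp add: G'_def b'_def sum.remove)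
      also have "(\<Sum>P\<in>G'. emeasure (mu lam) P * b' P) + ennreal (\<beta> P0) * (\<Sum>P\<in>G. emeasure (mu lam) P)
          \<le> K * (\<integral>\<^sup>+x. h x * Bm G' b' x \<partial>mu lam) + ennreal (\<beta> P0) * (K * (\<integral>\<^sup>+x. h x * indicator (\<Union>G) x \<partial>mu lam))"
        using IH base by (intro add_mono mult_left_mono) auto
      also have "\<dots> = K * ((\<integral>\<^sup>+x. h x * Bm G' b' x \<partial>mu lam) + (\<integral>\<^sup>+x. ennreal (\<beta> P0) * (h x * indicator (\<Union>G) x) \<partial>mu lam))"
        using mU by (subst nn_integral_cmult) (auto simp: distrib_left mult.left_commute)
      also have "(\<integral>\<^sup>+x. h x * Bm G' b' x \<partial>mu lam) + (\<integral>\<^sup>+x. ennreal (\<beta> P0) * (h x * indicator (\<Union>G) x) \<partial>mu lam)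
          = (\<integral>\<^sup>+x. h x * (Bm G' b' x + ennreal (\<beta> P0) * indicator (\<Union>G) x) \<partial>mu lam)"
        using mB' mU by (subst nn_integral_add[symmetric]) (auto simp: distrib_left mult.left_commute)
      also have "\<dots> \<le> (\<integral>\<^sup>+x. h x * Bm G b x \<partial>mu lam)"
      proof (rule nn_integral_mono)
        fix x
        have "Bm G' b' x + ennreal (\<beta> P0) * indicator (\<Union>G) x \<le> Bm G (\<lambda>P. ennreal (\<beta> P)) x"
          unfolding G'_def b'_def by (rule Bm_pointwise[where \<beta>=\<beta>, OF P0(1) mn \<beta>nn])
        also have "\<dots> = Bm G b x" using b\<beta> by (metis Bm_cong)
        finally show "h x * (Bm G' b' x + ennreal (\<beta> P0) * indicator (\<Union>G) x) \<le> h x * Bm G b x"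
          by (rule mult_left_mono) simp
      qed
      finally show ?thesis unfolding K_def by (simp add: mult_left_mono)
    qed
  qed
qed

definition LL :: "nat \<Rightarrow> nat" where
  "LL k = (if k < 12 then 0 else 2 ^ (k div 2 + 1))"

lemma pair_sum: "(\<Sum>k<2*M. g k) = (\<Sum>m<M. g (2*m) + g (2*m+1))" for g :: "nat \<Rightarrow> real"
  by (induction M) (simp_all add: add.assoc)

lemma LL_pair: "(1/2)^(2*m) * real (LL (2*m)) + (1/2)^(2*m+1) * real (LL (2*m+1)) = (if m < 6 then 0 else 3 * (1/2::real)^m)"
proof (cases "m < 6")
  case True then show ?thesis by (simp add: LL_def)
next
  case False
  have d1: "(2*m) div 2 = m" by simp
  have d2: "(2*m+1) div 2 = m" by simp
  have "(1/2::real)^(2*m) * 2^(m+1) = 2 * (1/2)^m"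
    by (simp add: power_mult power_add field_simps power_one_over power2_eq_square)
  moreover have "(1/2::real)^(2*m+1) * 2^(m+1) = (1/2)^m"
    by (simp add: power_mult power_add field_simps power_one_over power2_eq_square)
  ultimately show ?thesis using False by (simp add: LL_def d1 d2)
qed

lemma geo_tail: "(\<Sum>m<M. (if m < 6 then 0 else 3 * (1/2::real)^m)) = (if M \<le> 6 then 0 else 3/32 - 6 * (1/2)^M)"
proof (induction M)
  case 0 then show ?case by simp
next
  case (Suc M)
  show ?case
  proof (cases "M < 6")
    case True
    then have "M \<le> 5" by simp
    then have "M = 0 \<or> M = 1 \<or> M = 2 \<or> M = 3 \<or> M = 4 \<or> M = 5" by auto
    then show ?thesis using Suc by auto
  next
    case False
    then show ?thesis using Suc by (auto simp: field_simps)
  qed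
qed

lemma LL_sum: "(\<Sum>k<N. (1/2::real)^k * real (LL k)) \<le> 3/32"
proof -
  have "(\<Sum>k<N. (1/2::real)^k * real (LL k)) \<le> (\<Sum>k<2*N. (1/2::real)^k * real (LL k))"
    by (intro sum_mono2) auto
  also have "\<dots> = (\<Sum>m<N. (if m < 6 then 0 else 3 * (1/2::real)^m))"
    unfolding pair_sum LL_pair ..
  also have "\<dots> \<le> 3/32" unfolding geo_tail by auto
  finally show ?thesis .
qed


context
  fixes \<phi> :: "real \<Rightarrow> real"
  assumes yg: "young \<phi>" and sm: "summable (\<lambda>k. K_term \<phi> (Suc k))"
begin

lemma Kterm_nn: "0 \<le> K_term \<phi> k"
  unfolding K_term_def using cinv_nonneg[OF yg, of "32 ^ 2 ^ k"] by simp

lemma K_nn: "0 \<le> K_phi \<phi>"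
  unfolding K_phi_def using sm Kterm_nn by (intro suminf_nonneg) auto

lemma Kterm_le_K: "K_term \<phi> (Suc n) \<le> K_phi \<phi>"
proof -
  have "(\<Sum>k\<in>{n}. K_term \<phi> (Suc k)) \<le> (\<Sum>k. K_term \<phi> (Suc k))"
    using sm Kterm_nn by (intro sum_le_suminf) auto
  then show ?thesis by (simp add: K_phi_def)
qed

lemma sum_Kterm_le: "(\<Sum>m<M. K_term \<phi> m) \<le> K_phi \<phi>"
proof (cases M)
  case 0 then show ?thesis using K_nn by simp
next
  case (Suc M')
  have "(\<Sum>m<M. K_term \<phi> m) = K_term \<phi> 0 + (\<Sum>m<M'. K_term \<phi> (Suc m))"
    unfolding Suc by (rule sum.lessThan_Suc_shift)
  also have "K_term \<phi> 0 = 0" by (simp add: K_term_def)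
  also have "(\<Sum>m<M'. K_term \<phi> (Suc m)) \<le> (\<Sum>m. K_term \<phi> (Suc m))"
    using sm Kterm_nn by (intro sum_le_suminf) auto
  finally show ?thesis by (simp add: K_phi_def)
qed

lemma inv_cinv1: "1 / conj_inv \<phi> 1 \<le> 1024 * K_term \<phi> 1"
proof -
  have c1: "conj_inv \<phi> 1 > 0" by (rule cinv_pos[OF yg]) simp
  have c2: "conj_inv \<phi> 1024 > 0" by (rule cinv_pos[OF yg]) simp
  have "conj_inv \<phi> (1024 * 1) \<le> 1024 * conj_inv \<phi> 1" by (rule cinv_scale[OF yg]) auto
  then have "conj_inv \<phi> 1024 \<le> 1024 * conj_inv \<phi> 1" by simp
  then have "1 / conj_inv \<phi> 1 \<le> 1024 / conj_inv \<phi> 1024"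
    using c1 c2 by (simp add: field_simps)
  also have "\<dots> = 1024 * K_term \<phi> 1" by (simp add: K_term_def)
  finally show ?thesis .
qed

lemma term_bound:
  "real (k + 2) / conj_inv \<phi> (31 ^ LL k) \<le> 14336 * K_term \<phi> 1 * (if k < 12 then 1 else 0) + 3 * K_term \<phi> (k div 2)"
proof (cases "k < 12")
  case True
  have c1: "conj_inv \<phi> 1 > 0" by (rule cinv_pos[OF yg]) simp
  have "real (k + 2) / conj_inv \<phi> (31 ^ LL k) = real (k + 2) * (1 / conj_inv \<phi> 1)"
    using True by (simp add: LL_def)
  also have "\<dots> \<le> 14 * (1024 * K_term \<phi> 1)"
    using True inv_cinv1 c1 by (intro mult_mono) auto
  also have "\<dots> \<le> 14336 * K_term \<phi> 1 * (if k < 12 then 1 else 0) + 3 * K_term \<phi> (k div 2)"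
    using True Kterm_nn[of "k div 2"] by simp
  finally show ?thesis .
next
  case False
  define m where "m = k div 2"
  have m6: "m \<ge> 6" using False by (simp add: m_def)
  have LLk: "LL k = 2 * 2 ^ m" using False by (simp add: LL_def m_def)
  have "(32::real) ^ 2 ^ m \<le> 961 ^ 2 ^ m" by (intro power_mono) auto
  also have "(961::real) ^ 2 ^ m = 31 ^ LL k" by (simp add: LLk power_mult)
  finally have pw: "(32::real) ^ 2 ^ m \<le> 31 ^ LL k" .
  have cpos: "conj_inv \<phi> (32 ^ 2 ^ m) > 0" by (rule cinv_pos[OF yg]) simp
  have cle: "conj_inv \<phi> (32 ^ 2 ^ m) \<le> conj_inv \<phi> (31 ^ LL k)"
    by (rule cinv_mono[OF yg]) (use pw in auto)
  have k2: "real (k + 2) \<le> 3 * real m" using m6 by (simp add: m_def)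
  have "real (k + 2) / conj_inv \<phi> (31 ^ LL k) \<le> real (k + 2) / conj_inv \<phi> (32 ^ 2 ^ m)"
    using cpos cle by (intro divide_left_mono) auto
  also have "\<dots> \<le> 3 * real m / conj_inv \<phi> (32 ^ 2 ^ m)"
    using cpos k2 by (intro divide_right_mono) auto
  also have "\<dots> = 3 * K_term \<phi> m" by (simp add: K_term_def)
  finally show ?thesis using False by (simp add: m_def)
qed

lemma count12: "(\<Sum>k<N. (if k < 12 then (1::real) else 0)) = real (min N 12)"
  by (induction N) auto

lemma main_sum: "(\<Sum>k<N. real (k + 2) / conj_inv \<phi> (31 ^ LL k)) \<le> 200000 * K_phi \<phi>"
proof -
  have "(\<Sum>k<N. real (k + 2) / conj_inv \<phi> (31 ^ LL k))
      \<le> (\<Sum>k<N. 14336 * K_term \<phi> 1 * (if k < 12 then 1 else 0) + 3 * K_term \<phi> (k div 2))"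
    by (intro sum_mono term_bound)
  also have "\<dots> = 14336 * K_term \<phi> 1 * (\<Sum>k<N. (if k < 12 then 1 else 0)) + 3 * (\<Sum>k<N. K_term \<phi> (k div 2))"
    by (simp add: sum.distrib sum_distrib_left)
  also have "(\<Sum>k<N. K_term \<phi> (k div 2)) \<le> (\<Sum>k<2*N. K_term \<phi> (k div 2))"
    using Kterm_nn by (intro sum_mono2) auto
  also have "\<dots> = (\<Sum>m<N. 2 * K_term \<phi> m)"
    unfolding pair_sum by simp
  also have "\<dots> \<le> 2 * K_phi \<phi>"
    using sum_Kterm_le[of N] by (simp add: sum_distrib_left[symmetric])
  also have "(\<Sum>k<N. (if k < 12 then (1::real) else 0)) \<le> 12"
    unfolding count12 by simp
  finally have "(\<Sum>k<N. real (k + 2) / conj_inv \<phi> (31 ^ LL k)) \<le> 14336 * K_term \<phi> 1 * 12 + 3 * (2 * K_phi \<phi>)"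
    using Kterm_nn[of 1] by (simp add: mult_left_mono)
  also have "\<dots> \<le> 14336 * K_phi \<phi> * 12 + 3 * (2 * K_phi \<phi>)"
    using Kterm_le_K[of 0] by simp
  also have "\<dots> \<le> 200000 * K_phi \<phi>" using K_nn by simp
  finally show ?thesis .
qed

end

lemma Phi_nn: "0 \<le> x \<Longrightarrow> 0 \<le> Phi x"
  unfolding Phi_def by (intro mult_nonneg_nonneg) (auto intro!: ln_ge_zero simp: add_increasing2)

lemma ln_e_ge1: "0 \<le> (s::real) \<Longrightarrow> 1 \<le> ln (exp 1 + s)"
proof -
  assume s: "0 \<le> s"
  have "exp 1 \<le> exp 1 + s" using s by simp
  then show ?thesis using s by (subst ln_ge_iff) (auto intro: add_pos_nonneg)
qed

lemma Phi_scale: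
  assumes s: "0 \<le> s"
  shows "Phi (2^n * s) \<le> 2^n * (1 + real n) * Phi s"
proof -
  have l1: "1 \<le> ln (exp 1 + s)" by (rule ln_e_ge1[OF s])
  have "exp 1 + 2^n * s \<le> 2^n * (exp 1 + s)"
    using s by (simp add: algebra_simps)
  moreover have "0 < (2::real)^n * (exp 1 + s)" using s by (intro mult_pos_pos add_pos_nonneg) auto
  moreover have "0 < exp 1 + (2::real)^n * s" using s by (intro add_pos_nonneg) auto
  ultimately have "ln (exp 1 + 2^n * s) \<le> ln (2^n * (exp 1 + s))"
    by (subst ln_le_cancel_iff) auto
  also have "\<dots> = real n * ln 2 + ln (exp 1 + s)"
  proof -
    have "0 < exp 1 + s" using s by (intro add_pos_nonneg) auto
    then show ?thesis by (simp add: ln_mult ln_realpow)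
  qed
  also have "\<dots> \<le> real n * ln (exp 1 + s) + ln (exp 1 + s)"
  proof -
    have "ln (2::real) \<le> 1" using ln_2_less_1 by simp
    then have "ln 2 \<le> ln (exp 1 + s)" using l1 by simp
    then show ?thesis by (simp add: mult_left_mono)
  qed
  also have "\<dots> = (1 + real n) * ln (exp 1 + s)" by (simp add: algebra_simps)
  finally have L: "ln (exp 1 + 2^n * s) \<le> (1 + real n) * ln (exp 1 + s)" .
  have "Phi (2^n * s) = 2^n * s * ln (exp 1 + 2^n * s)" by (simp add: Phi_def)
  also have "\<dots> \<le> 2^n * s * ((1 + real n) * ln (exp 1 + s))"
    using L s by (intro mult_left_mono) auto
  also have "\<dots> = 2^n * (1 + real n) * Phi s" by (simp add: Phi_def algebra_simps)
  finally show ?thesis .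
qed

lemma Phi_meas[measurable]: "Phi \<in> borel_measurable borel"
  unfolding Phi_def by measurable

lemma level_choice:
  assumes t: "t > 0" and a0: "0 < \<alpha>" and at: "\<alpha> \<le> ennreal t"
  shows "\<exists>k. ennreal (t * (1/2)^Suc k) < \<alpha> \<and> \<alpha> \<le> ennreal (t * (1/2)^k)"
proof -
  obtain a where a: "\<alpha> = ennreal a" "0 \<le> a" using at by (cases \<alpha>) (auto simp: top_unique)
  have apos: "a > 0" using a a0 by (auto simp: ennreal_eq_0_iff)
  have at': "a \<le> t" using a at t by (simp add: ennreal_le_iff)
  obtain n where n: "(1/2::real)^n < a / t" using real_arch_pow_inv[of "a/t" "1/2"] apos t by auto
  have ex: "\<exists>k. t * (1/2)^Suc k < a"
  proof
    have "t * (1/2::real)^Suc n \<le> t * (1/2)^n" using t by (intro mult_left_mono) (auto simp: power_decreasing)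
    also have "\<dots> < a" using n t by (simp add: field_simps)
    finally show "t * (1/2)^Suc n < a" .
  qed
  define k where "k = (LEAST k. t * (1/2::real)^Suc k < a)"
  have k1: "t * (1/2)^Suc k < a" unfolding k_def by (rule LeastI_ex[OF ex])
  have k2: "a \<le> t * (1/2)^k"
  proof (cases k)
    case 0 then show ?thesis using at' by simp
  next
    case (Suc k')
    then have "\<not> t * (1/2::real)^Suc k' < a" unfolding k_def using not_less_Least by (metis lessI)
    then show ?thesis using Suc by simp
  qed
  show ?thesis using k1 k2 a t by (intro exI[of _ k]) (auto simp: ennreal_less_iff ennreal_le_iff)
qed

lemma card_filter_ennreal:
  "finite G \<Longrightarrow> of_nat (card {P\<in>G. x \<in> D P}) = (\<Sum>P\<in>G. indicator (D P) x :: ennreal)"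
proof -
  assume fin: "finite G"
  have "(\<Sum>P\<in>G. indicator (D P) x :: ennreal) = (\<Sum>P\<in>G. if x \<in> D P then 1 else 0)"
    by (intro sum.cong) (auto simp: indicator_def)
  also have "\<dots> = (\<Sum>P\<in>{P\<in>G. x \<in> D P}. 1)"
    using sum.inter_filter[OF fin, of "\<lambda>_. (1::ennreal)" "\<lambda>P. x \<in> D P"] by (simp only:)
  also have "\<dots> = of_nat (card {P\<in>G. x \<in> D P})" by simp
  finally show ?thesis by simp
qed

lemma lux_big:
  assumes Q: "Q \<in> dyadic" and lam: "lam > 0" and t: "t > 0" and fm: "f \<in> borel_measurable borel"
    and gt: "ennreal (t * (1/2)^n) < lux lam Phi f Q"
  shows "emeasure (mu lam) Q \<le> ennreal (2^n * (1 + real n)) * (\<integral>\<^sup>+x\<in>Q. ennreal (Phi (\<bar>f x\<bar> / t)) \<partial>mu lam)"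
proof -
  have g: "t * (1/2)^n > 0" using t by simp
  have Qm: "Q \<in> sets borel" using Q by (rule dyadic_sets)
  have "emeasure (mu lam) Q < (\<integral>\<^sup>+x\<in>Q. ennreal (Phi (\<bar>f x\<bar> / (t * (1/2)^n))) \<partial>mu lam)"
    by (rule lux_gt_imp[OF Q lam g gt])
  also have "\<dots> \<le> (\<integral>\<^sup>+x\<in>Q. ennreal (2^n * (1 + real n)) * ennreal (Phi (\<bar>f x\<bar> / t)) \<partial>mu lam)"
  proof (rule nn_integral_mono)
    fix x
    have "\<bar>f x\<bar> / (t * (1/2)^n) = 2^n * (\<bar>f x\<bar> / t)" using t by (simp add: field_simps power_one_over)
    then have "Phi (\<bar>f x\<bar> / (t * (1/2)^n)) \<le> 2^n * (1 + real n) * Phi (\<bar>f x\<bar> / t)"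
      using Phi_scale[of "\<bar>f x\<bar> / t" n] t by simp
    then have "ennreal (Phi (\<bar>f x\<bar> / (t * (1/2)^n))) \<le> ennreal (2^n * (1 + real n)) * ennreal (Phi (\<bar>f x\<bar> / t))"
      using t Phi_nn[of "\<bar>f x\<bar> / t"] by (simp add: ennreal_mult[symmetric] ennreal_leI)
    then show "ennreal (Phi (\<bar>f x\<bar> / (t * (1/2)^n))) * indicator Q x \<le> ennreal (2^n * (1 + real n)) * ennreal (Phi (\<bar>f x\<bar> / t)) * indicator Q x"
      by (rule mult_right_mono) simp
  qed
  also have "\<dots> = ennreal (2^n * (1 + real n)) * (\<integral>\<^sup>+x\<in>Q. ennreal (Phi (\<bar>f x\<bar> / t)) \<partial>mu lam)"
    using fm Qm by (subst nn_integral_cmult[symmetric]) (auto simp: mult.assoc)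
  finally show ?thesis by simp
qed

definition vv :: "(real \<Rightarrow> real) \<Rightarrow> real \<Rightarrow> real \<Rightarrow> real" where
  "vv w lam y = w y * y powr (-2 * lam)"

definition hh :: "(real \<Rightarrow> real) \<Rightarrow> real \<Rightarrow> real \<Rightarrow> ennreal" where
  "hh f t x = ennreal (Phi (\<bar>f x\<bar> / t))"

context
  fixes lam :: real and F :: "real set set" and E :: "real set \<Rightarrow> real set"
    and \<phi> :: "real \<Rightarrow> real" and w f :: "real \<Rightarrow> real" and t :: real
  assumes lam: "lam > 0" and sp: "spf lam F E" and yg: "young \<phi>"
    and wpos: "\<And>x. x > 0 \<Longrightarrow> 0 \<le> w x" and wm: "w \<in> borel_measurable borel"
    and fm: "f \<in> borel_measurable borel" and t: "t > 0"
begin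

lemma vv_meas[measurable]: "vv w lam \<in> borel_measurable borel"
  unfolding vv_def using wm by measurable

lemma vv_pos: "x > 0 \<Longrightarrow> 0 \<le> vv w lam x"
  unfolding vv_def using wpos by simp

lemma hh_meas[measurable]: "hh f t \<in> borel_measurable borel"
  unfolding hh_def using fm by measurable

lemma finF: "finite F" using sp_fin[OF lam sp] .
lemma dyF: "F \<subseteq> dyadic" using sp_dy[OF lam sp] .

lemma BmF_meas[measurable]: "Bm F b \<in> borel_measurable borel"
  by (rule Bm_meas[OF finF dyF])

lemma omega_bound:
  "(\<integral>\<^sup>+x. ennreal (vv w lam x) * indicator (\<Union>{Q\<in>F. ennreal t < lux lam Phi f Q}) x \<partial>mu lam) * ennreal (conj_inv \<phi> 1)
    \<le> 2 * (\<integral>\<^sup>+x. hh f t x * Bm F (lux lam \<phi> (vv w lam)) x \<partial>mu lam)"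
proof -
  define G0 where "G0 = {Q\<in>F. ennreal t < lux lam Phi f Q}"
  define b where "b = lux lam \<phi> (vv w lam)"
  define c1 where "c1 = conj_inv \<phi> 1"
  have finG0: "finite G0" using finF by (simp add: G0_def)
  have dyG0: "G0 \<subseteq> dyadic" using dyF by (auto simp: G0_def)
  have mU: "\<Union>G0 \<in> sets borel" by (rule finite_Union_sets[OF finG0 dyG0])
  define N1 where "N1 = density (mu lam) (\<lambda>x. ennreal (vv w lam x) * ennreal c1)"
  define N2 where "N2 = density (mu lam) (\<lambda>x. 2 * (hh f t x * Bm F b x))"
  have eN1: "emeasure N1 A = (\<integral>\<^sup>+x. ennreal (vv w lam x) * indicator A x \<partial>mu lam) * ennreal c1" if A: "A \<in> sets borel" for A
  proof -
    have "emeasure N1 A = (\<integral>\<^sup>+x. ennreal (vv w lam x) * ennreal c1 * indicator A x \<partial>mu lam)"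
      unfolding N1_def using A by (subst emeasure_density) auto
    also have "\<dots> = (\<integral>\<^sup>+x. ennreal (vv w lam x) * indicator A x * ennreal c1 \<partial>mu lam)"
      by (simp add: mult_ac)
    also have "\<dots> = (\<integral>\<^sup>+x. ennreal (vv w lam x) * indicator A x \<partial>mu lam) * ennreal c1"
      using A by (subst nn_integral_multc) auto
    finally show ?thesis .
  qed
  have eN2: "emeasure N2 A = (\<integral>\<^sup>+x. 2 * (hh f t x * Bm F b x) * indicator A x \<partial>mu lam)" if A: "A \<in> sets borel" for A
    unfolding N2_def using A by (subst emeasure_density) auto
  have "emeasure N1 (\<Union>G0) \<le> emeasure N2 (\<Union>G0)"
  proof (rule union_le[OF finG0 dyG0])
    show "sets N1 = sets borel" by (simp add: N1_def)
    show "sets N2 = sets borel" by (simp add: N2_def)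
    fix Q assume Q: "Q \<in> G0"
    have QF: "Q \<in> F" and Qd: "Q \<in> dyadic" and big: "ennreal t < lux lam Phi f Q"
      using Q dyG0 by (auto simp: G0_def)
    have Qm: "Q \<in> sets borel" using Qd by (rule dyadic_sets)
    have "emeasure N1 Q = (\<integral>\<^sup>+x\<in>Q. ennreal (vv w lam x) \<partial>mu lam) * ennreal c1"
      using Qm by (simp add: eN1)
    also have "\<dots> \<le> 2 * emeasure (mu lam) Q * b Q"
      unfolding c1_def b_def
      by (rule holder[OF yg lam Qd Qm subset_refl _ _ vv_meas vv_pos]) auto
    also have "\<dots> \<le> 2 * (\<integral>\<^sup>+x\<in>Q. hh f t x \<partial>mu lam) * b Q"
    proof -
      have "emeasure (mu lam) Q \<le> ennreal (2^0 * (1 + real 0)) * (\<integral>\<^sup>+x\<in>Q. ennreal (Phi (\<bar>f x\<bar> / t)) \<partial>mu lam)"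
        by (rule lux_big[OF Qd lam t fm]) (use big in simp)
      then have "emeasure (mu lam) Q \<le> (\<integral>\<^sup>+x\<in>Q. hh f t x \<partial>mu lam)" by (simp add: hh_def)
      then show ?thesis by (intro mult_right_mono mult_left_mono) auto
    qed
    also have "\<dots> = 2 * (\<integral>\<^sup>+x. hh f t x * indicator Q x * b Q \<partial>mu lam)"
      using Qm by (subst nn_integral_multc) (auto simp: mult.assoc)
    also have "\<dots> \<le> 2 * (\<integral>\<^sup>+x. hh f t x * Bm F b x * indicator Q x \<partial>mu lam)"
    proof (intro mult_left_mono nn_integral_mono)
      fix x
      show "hh f t x * indicator Q x * b Q \<le> hh f t x * Bm F b x * indicator Q x"
      proof (cases "x \<in> Q")
        case True
        then have "b Q \<le> Bm F b x" by (rule Bm_ge[OF QF])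
        then show ?thesis using True by (simp add: mult_left_mono)
      qed simp
    qed simp
    also have "\<dots> = emeasure N2 Q"
      using Qm by (simp add: eN2 nn_integral_cmult mult.assoc)
    finally show "emeasure N1 Q \<le> emeasure N2 Q" .
  qed
  also have "emeasure N2 (\<Union>G0) \<le> (\<integral>\<^sup>+x. 2 * (hh f t x * Bm F b x) \<partial>mu lam)"
    using mU by (simp add: eN2) (intro nn_integral_mono, simp add: indicator_def)
  also have "\<dots> = 2 * (\<integral>\<^sup>+x. hh f t x * Bm F b x \<partial>mu lam)"
    by (subst nn_integral_cmult) auto
  finally show ?thesis using mU by (simp add: eN1 G0_def b_def c1_def)
qed


lemma level_bound:
  assumes G: "G \<subseteq> F" and big: "\<And>Q. Q \<in> G \<Longrightarrow> ennreal (t * (1/2)^Suc k) < lux lam Phi f Q"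
  shows "(\<integral>\<^sup>+x. ennreal (vv w lam x) * of_nat (cnt G x - L) \<partial>mu lam) * ennreal (conj_inv \<phi> (31^L))
          \<le> ennreal (2 * (32/31 * (2^Suc k * (1 + real (Suc k))))) * (\<integral>\<^sup>+x. hh f t x * Bm F (lux lam \<phi> (vv w lam)) x \<partial>mu lam)"
proof -
  define b where "b = lux lam \<phi> (vv w lam)"
  define c where "c = 2^Suc k * (1 + real (Suc k))"
  define cL where "cL = conj_inv \<phi> (31^L)"
  define D where "D P = {x\<in>P. Suc L \<le> cntP G P x}" for P
  have spG: "spf lam G E" using sp G by (rule spf_subset)
  note finG = sp_fin[OF lam spG] and dyG = sp_dy[OF lam spG]
  have Dm: "D P \<in> sets borel" if "P \<in> G" for P
    unfolding D_def using finG dyG that dyadic_sets by (intro meas_cntP) auto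
  have pw: "ennreal (vv w lam x) * of_nat (cnt G x - L) \<le> (\<Sum>P\<in>G. ennreal (vv w lam x) * indicator (D P) x)" for x
  proof -
    have "cnt G x - L \<le> card {P\<in>G. x \<in> P \<and> L + 1 \<le> cntP G P x}" by (rule count_tail[OF finG dyG])
    also have "{P\<in>G. x \<in> P \<and> L + 1 \<le> cntP G P x} = {P\<in>G. x \<in> D P}" by (auto simp: D_def)
    finally have "(of_nat (cnt G x - L) :: ennreal) \<le> of_nat (card {P\<in>G. x \<in> D P})" by simp
    also have "\<dots> = (\<Sum>P\<in>G. indicator (D P) x)" by (rule card_filter_ennreal[OF finG])
    finally show ?thesis by (simp add: sum_distrib_left[symmetric] mult_left_mono)
  qed
  have "(\<integral>\<^sup>+x. ennreal (vv w lam x) * of_nat (cnt G x - L) \<partial>mu lam) * ennreal cL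
       \<le> (\<integral>\<^sup>+x. (\<Sum>P\<in>G. ennreal (vv w lam x) * indicator (D P) x) \<partial>mu lam) * ennreal cL"
    by (intro mult_right_mono nn_integral_mono pw) simp
  also have "\<dots> = (\<Sum>P\<in>G. (\<integral>\<^sup>+x. ennreal (vv w lam x) * indicator (D P) x \<partial>mu lam)) * ennreal cL"
    using Dm by (subst nn_integral_sum) auto
  also have "\<dots> = (\<Sum>P\<in>G. (\<integral>\<^sup>+x. ennreal (vv w lam x) * indicator (D P) x \<partial>mu lam) * ennreal cL)"
    by (simp add: sum_distrib_right)
  also have "\<dots> \<le> (\<Sum>P\<in>G. 2 * emeasure (mu lam) P * b P)"
  proof (rule sum_mono)
    fix P assume P: "P \<in> G"
    have Pd: "P \<in> dyadic" using P dyG by auto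
    have DP: "D P \<subseteq> P" by (auto simp: D_def)
    have "ennreal (31^L) * emeasure (mu lam) (D P) \<le> ennreal (31^L) * (ennreal ((1/31)^L) * emeasure (mu lam) P)"
      unfolding D_def by (intro mult_left_mono decay[OF lam spG P]) simp
    also have "\<dots> = emeasure (mu lam) P"
      by (subst enn_mul) (auto simp: power_mult_distrib[symmetric])
    finally have sD: "ennreal (31^L) * emeasure (mu lam) (D P) \<le> emeasure (mu lam) P" .
    show "(\<integral>\<^sup>+x. ennreal (vv w lam x) * indicator (D P) x \<partial>mu lam) * ennreal cL \<le> 2 * emeasure (mu lam) P * b P"
      unfolding cL_def b_def
      by (rule holder[OF yg lam Pd Dm[OF P] DP _ sD vv_meas vv_pos]) auto
  qed
  also have "\<dots> = 2 * (\<Sum>P\<in>G. emeasure (mu lam) P * b P)"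
    by (simp add: sum_distrib_left mult.assoc)
  also have "\<dots> \<le> 2 * (ennreal (32/31 * c) * (\<integral>\<^sup>+x. hh f t x * Bm G b x \<partial>mu lam))"
  proof (intro mult_left_mono)
    show "(\<Sum>P\<in>G. emeasure (mu lam) P * b P) \<le> ennreal (32/31 * c) * (\<integral>\<^sup>+x. hh f t x * Bm G b x \<partial>mu lam)"
    proof (rule carleson_max[OF lam spG hh_meas])
      show "0 \<le> c" by (simp add: c_def)
      fix P assume P: "P \<in> G"
      have Pd: "P \<in> dyadic" using P dyG by auto
      have "ennreal (t * (1/2)^Suc k) < lux lam Phi f P" by (rule big[OF P])
      then show "emeasure (mu lam) P \<le> ennreal c * (\<integral>\<^sup>+x\<in>P. hh f t x \<partial>mu lam)"
        unfolding c_def hh_def by (rule lux_big[OF Pd lam t fm])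
    qed
  qed simp
  also have "\<dots> \<le> 2 * (ennreal (32/31 * c) * (\<integral>\<^sup>+x. hh f t x * Bm F b x \<partial>mu lam))"
    using Bm_mono[OF G] by (intro mult_left_mono nn_integral_mono) auto
  also have "\<dots> = ennreal 2 * (ennreal (32/31 * c) * (\<integral>\<^sup>+x. hh f t x * Bm F b x \<partial>mu lam))"
    by simp
  also have "\<dots> = ennreal (2 * (32/31 * c)) * (\<integral>\<^sup>+x. hh f t x * Bm F b x \<partial>mu lam)"
    by (rule enn_mul) (auto simp: c_def)
  finally show ?thesis unfolding b_def c_def cL_def .
qed

end

lemma cnt_meas:
  assumes "finite G" "G \<subseteq> dyadic"
  shows "(\<lambda>x. of_nat (cnt G x - L) :: ennreal) \<in> borel_measurable borel"
proof -
  have m: "(\<lambda>x. (\<Sum>Q\<in>G. indicator Q x :: real)) \<in> borel_measurable borel"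
    using assms dyadic_sets by (intro borel_measurable_sum) auto
  have "(\<lambda>x. ennreal ((\<Sum>Q\<in>G. indicator Q x :: real) - real L)) \<in> borel_measurable borel"
    using m by measurable
  moreover have "(\<lambda>x. ennreal ((\<Sum>Q\<in>G. indicator Q x :: real) - real L)) = (\<lambda>x. of_nat (cnt G x - L) :: ennreal)"
  proof
    fix x
    have e: "(\<Sum>Q\<in>G. indicator Q x :: real) = real (cnt G x)"
      unfolding cnt_def by (rule card_filter_sum[OF assms(1), symmetric])
    show "ennreal ((\<Sum>Q\<in>G. indicator Q x :: real) - real L) = of_nat (cnt G x - L)"
    proof (cases "L \<le> cnt G x")
      case True then show ?thesis unfolding e by (simp add: ennreal_of_nat_eq_real_of_nat of_nat_diff)
    next
      case False then show ?thesis unfolding e by (simp add: ennreal_neg)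
    qed
  qed
  ultimately show ?thesis by simp
qed

lemma div_bound:
  fixes I X :: ennreal
  assumes c: "0 < c" and B: "0 \<le> B" and h: "I * ennreal c \<le> ennreal B * X"
  shows "I \<le> ennreal (B / c) * X"
proof -
  have "I = I * ennreal c / ennreal c" using c by (simp add: mult_divide_eq_ennreal)
  also have "\<dots> \<le> ennreal B * X / ennreal c" using h by (rule divide_right_mono_ennreal)
  also have "\<dots> = ennreal B / ennreal c * X" by (simp add: ennreal_divide_times mult.commute ennreal_times_divide)
  also have "ennreal B / ennreal c = ennreal (B / c)" using B c by (rule divide_ennreal)
  finally show ?thesis .
qed


context
  fixes lam :: real and F :: "real set set" and E :: "real set \<Rightarrow> real set"
    and \<phi> :: "real \<Rightarrow> real" and w f :: "real \<Rightarrow> real" and t :: real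
  assumes lam: "lam > 0" and sp: "spf lam F E" and yg: "young \<phi>"
    and wpos: "\<And>x. x > 0 \<Longrightarrow> 0 \<le> w x" and wm: "w \<in> borel_measurable borel"
    and fm: "f \<in> borel_measurable borel" and t: "t > 0"
    and sm: "summable (\<lambda>k. K_term \<phi> (Suc k))"
begin

lemma pw_bound:
  fixes N :: nat and S :: "nat \<Rightarrow> real set set"
  assumes SF: "\<And>k. S k \<subseteq> F"
    and Sdef: "\<And>k Q. Q \<in> S k \<Longrightarrow> lux lam Phi f Q \<le> ennreal (t * (1/2)^k)"
    and cov: "\<And>Q. Q \<in> F \<Longrightarrow> 0 < lux lam Phi f Q \<Longrightarrow> lux lam Phi f Q \<le> ennreal t \<Longrightarrow> \<exists>k<N. Q \<in> S k"
    and x: "x \<notin> \<Union>{Q\<in>F. ennreal t < lux lam Phi f Q}"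
  shows "(\<Sum>Q\<in>F. lux lam Phi f Q * indicator Q x)
         \<le> ennreal (t * (3/32)) + ennreal t * (\<Sum>k<N. ennreal ((1/2)^k) * of_nat (cnt (S k) x - LL k))"
proof -
  have finF: "finite F" using sp_fin[OF lam sp] .
  define T where "T k = cnt (S k) x" for k
  have step1: "lux lam Phi f Q * indicator Q x \<le> (\<Sum>k<N. ennreal (t * (1/2)^k) * (if Q \<in> S k \<and> x \<in> Q then 1 else 0))"
    if Q: "Q \<in> F" for Q
  proof (cases "x \<in> Q")
    case False then show ?thesis by simp
  next
    case True
    have le: "lux lam Phi f Q \<le> ennreal t"
    proof (rule ccontr)
      assume "\<not> ?thesis"
      then have "ennreal t < lux lam Phi f Q" by simp
      then show False using x Q True by auto
    qed
    show ?thesis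
    proof (cases "lux lam Phi f Q = 0")
      case True then show ?thesis by simp
    next
      case False
      then obtain k where k: "k < N" "Q \<in> S k" using cov[OF Q _ le] by (auto simp: zero_less_iff_neq_zero)
      have "lux lam Phi f Q * indicator Q x \<le> ennreal (t * (1/2)^k) * (if Q \<in> S k \<and> x \<in> Q then 1 else 0)"
        using Sdef[OF k(2)] True k by simp
      also have "\<dots> \<le> (\<Sum>k<N. ennreal (t * (1/2)^k) * (if Q \<in> S k \<and> x \<in> Q then 1 else 0))"
        using k by (intro member_le_sum) auto
      finally show ?thesis .
    qed
  qed
  have cntsum: "(\<Sum>Q\<in>F. (if Q \<in> S k \<and> x \<in> Q then 1 else 0 :: ennreal)) = of_nat (T k)" for k
  proof -
    have "(\<Sum>Q\<in>F. (if Q \<in> S k \<and> x \<in> Q then 1 else 0 :: ennreal)) = (\<Sum>Q\<in>{Q\<in>F. Q \<in> S k \<and> x \<in> Q}. 1)"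
      using sum.inter_filter[OF finF, of "\<lambda>_. (1::ennreal)" "\<lambda>Q. Q \<in> S k \<and> x \<in> Q"] by (simp only:)
    also have "{Q\<in>F. Q \<in> S k \<and> x \<in> Q} = {Q\<in>S k. x \<in> Q}" using SF by auto
    finally show ?thesis by (simp add: T_def cnt_def)
  qed
  have "(\<Sum>Q\<in>F. lux lam Phi f Q * indicator Q x)
      \<le> (\<Sum>Q\<in>F. \<Sum>k<N. ennreal (t * (1/2)^k) * (if Q \<in> S k \<and> x \<in> Q then 1 else 0))"
    by (intro sum_mono step1)
  also have "\<dots> = (\<Sum>k<N. ennreal (t * (1/2)^k) * (\<Sum>Q\<in>F. (if Q \<in> S k \<and> x \<in> Q then 1 else 0)))"
    by (subst sum.swap) (simp add: sum_distrib_left)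
  also have "\<dots> = (\<Sum>k<N. ennreal (t * (1/2)^k) * of_nat (T k))"
    by (simp add: cntsum)
  also have "\<dots> \<le> (\<Sum>k<N. ennreal (t * (1/2)^k) * (of_nat (LL k) + of_nat (T k - LL k)))"
  proof (intro sum_mono mult_left_mono)
    fix k
    have "T k \<le> LL k + (T k - LL k)" by simp
    then show "(of_nat (T k) :: ennreal) \<le> of_nat (LL k) + of_nat (T k - LL k)"
      by (metis of_nat_add of_nat_le_iff)
  qed simp
  also have "\<dots> = (\<Sum>k<N. ennreal (t * (1/2)^k * real (LL k))) + ennreal t * (\<Sum>k<N. ennreal ((1/2)^k) * of_nat (T k - LL k))"
  proof -
    have "ennreal (t * (1/2)^k) * (of_nat (LL k) + of_nat (T k - LL k))
        = ennreal (t * (1/2)^k * real (LL k)) + ennreal t * (ennreal ((1/2)^k) * of_nat (T k - LL k))" for k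
      using t by (simp add: distrib_left ennreal_of_nat_eq_real_of_nat ennreal_mult mult.assoc)
    then show ?thesis by (simp add: sum.distrib sum_distrib_left)
  qed
  also have "(\<Sum>k<N. ennreal (t * (1/2)^k * real (LL k))) = ennreal (\<Sum>k<N. t * (1/2)^k * real (LL k))"
    using t by (intro sum_ennreal) auto
  also have "(\<Sum>k<N. t * (1/2)^k * real (LL k)) = t * (\<Sum>k<N. (1/2)^k * real (LL k))"
    by (simp add: sum_distrib_left mult.assoc)
  also have "\<dots> \<le> t * (3/32)" using t LL_sum by (intro mult_left_mono) auto
  finally show ?thesis by (simp add: T_def ennreal_leI add_right_mono order_trans)
qed


lemma finite_main:
  "(\<integral>\<^sup>+x. ennreal (vv w lam x) * indicator {x. 0 < x \<and> ennreal t < (\<Sum>Q\<in>F. lux lam Phi f Q * indicator Q x)} x \<partial>mu lam)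
     \<le> ennreal (2000000 * K_phi \<phi>) * (\<integral>\<^sup>+x. hh f t x * Bm F (lux lam \<phi> (vv w lam)) x \<partial>mu lam)"
proof -
  have finF: "finite F" using sp_fin[OF lam sp] .
  have dyF: "F \<subseteq> dyadic" using sp_dy[OF lam sp] .
  define X where "X = (\<integral>\<^sup>+x. hh f t x * Bm F (lux lam \<phi> (vv w lam)) x \<partial>mu lam)"
  define K where "K = K_phi \<phi>"
  have Knn: "0 \<le> K" unfolding K_def by (rule K_nn[OF yg sm])
  define Om where "Om = \<Union>{Q\<in>F. ennreal t < lux lam Phi f Q}"
  define Ev where "Ev = {x. 0 < x \<and> ennreal t < (\<Sum>Q\<in>F. lux lam Phi f Q * indicator Q x)}"
  define S where "S k = {Q\<in>F. ennreal (t * (1/2)^Suc k) < lux lam Phi f Q \<and> lux lam Phi f Q \<le> ennreal (t * (1/2)^k)}" for k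
  have SF: "S k \<subseteq> F" for k by (auto simp: S_def)
  have finS: "finite (S k)" for k using finF SF by (rule finite_subset[rotated])
  have dyS: "S k \<subseteq> dyadic" for k using dyF SF by auto
  have "\<forall>Q\<in>F. \<exists>k. (0 < lux lam Phi f Q \<and> lux lam Phi f Q \<le> ennreal t \<longrightarrow> Q \<in> S k)"
  proof
    fix Q assume Q: "Q \<in> F"
    show "\<exists>k. (0 < lux lam Phi f Q \<and> lux lam Phi f Q \<le> ennreal t \<longrightarrow> Q \<in> S k)"
    proof (cases "0 < lux lam Phi f Q \<and> lux lam Phi f Q \<le> ennreal t")
      case True
      then obtain k where "ennreal (t * (1/2)^Suc k) < lux lam Phi f Q \<and> lux lam Phi f Q \<le> ennreal (t * (1/2)^k)"
        using level_choice[OF t] by blast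
      then show ?thesis using Q by (auto simp: S_def)
    qed auto
  qed
  then obtain kq where kq: "\<And>Q. Q \<in> F \<Longrightarrow> 0 < lux lam Phi f Q \<Longrightarrow> lux lam Phi f Q \<le> ennreal t \<Longrightarrow> Q \<in> S (kq Q)"
    by metis
  define N where "N = Suc (Max (kq ` F))"
  have cov: "\<And>Q. Q \<in> F \<Longrightarrow> 0 < lux lam Phi f Q \<Longrightarrow> lux lam Phi f Q \<le> ennreal t \<Longrightarrow> \<exists>k<N. Q \<in> S k"
  proof -
    fix Q assume Q: "Q \<in> F" "0 < lux lam Phi f Q" "lux lam Phi f Q \<le> ennreal t"
    have "kq Q \<le> Max (kq ` F)" using finF Q(1) by (intro Max_ge) auto
    then show "\<exists>k<N. Q \<in> S k" using kq[OF Q] by (intro exI[of _ "kq Q"]) (auto simp: N_def)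
  qed
  have Sdef: "\<And>k Q. Q \<in> S k \<Longrightarrow> lux lam Phi f Q \<le> ennreal (t * (1/2)^k)" by (auto simp: S_def)
  define R where "R x = (\<Sum>k<N. ennreal ((1/2)^k) * of_nat (cnt (S k) x - LL k))" for x
  have Rm: "R \<in> borel_measurable borel"
    unfolding R_def using cnt_meas[OF finS dyS] by measurable
  have Omm: "Om \<in> sets borel" unfolding Om_def using finF dyF by (intro finite_Union_sets) auto
    have ind: "indicator Ev x \<le> indicator Om x + ennreal (4/3) * R x" for x
  proof (cases "x \<in> Ev")
    case False then show ?thesis by simp
  next
    case True
    show ?thesis
    proof (cases "x \<in> Om")
      case True
      have "indicator Ev x \<le> (1::ennreal)" by (simp add: indicator_def)
      also have "(1::ennreal) \<le> 1 + ennreal (4/3) * R x" by (rule add_increasing2) auto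
      finally show ?thesis using True by simp
    next
      case False
      have A: "(\<Sum>Q\<in>F. lux lam Phi f Q * indicator Q x) \<le> ennreal (t * (3/32)) + ennreal t * R x"
        unfolding R_def by (rule pw_bound[OF SF Sdef cov]) (use False in \<open>auto simp: Om_def\<close>)
      have B: "ennreal t < (\<Sum>Q\<in>F. lux lam Phi f Q * indicator Q x)" using \<open>x \<in> Ev\<close> by (simp add: Ev_def)
      have "1 \<le> ennreal (4/3) * R x"
      proof (cases "R x = top")
        case True then show ?thesis by simp
      next
        case False
        then obtain r where r: "R x = ennreal r" "0 \<le> r" by (cases "R x") auto
        have "ennreal t < ennreal (t * (3/32) + t * r)"
          using A B r t by (simp add: ennreal_mult[symmetric] ennreal_plus[symmetric] del: ennreal_plus)
        then have "t < t * (3/32) + t * r" by (subst (asm) ennreal_less_iff) (use t in auto)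
        then have "29/32 < r" using t by (simp add: field_simps)
        then have r1: "1 \<le> 4/3 * r" by simp
        have "ennreal (4/3) * R x = ennreal (4/3 * r)" unfolding r(1) by (subst ennreal_mult) (use r(2) in auto)
        moreover have "ennreal 1 \<le> ennreal (4/3 * r)" using r1 by (rule ennreal_leI)
        ultimately show ?thesis by simp
      qed
      then show ?thesis using True by (simp add: add_increasing)
    qed
  qed
    have c1pos: "0 < conj_inv \<phi> 1" by (rule cinv_pos[OF yg]) simp
  have Om1: "(\<integral>\<^sup>+x. ennreal (vv w lam x) * indicator Om x \<partial>mu lam) * ennreal (conj_inv \<phi> 1) \<le> ennreal 2 * X"
    unfolding Om_def X_def using omega_bound[OF lam sp yg wpos wm fm t] by simp
  have Om2: "(\<integral>\<^sup>+x. ennreal (vv w lam x) * indicator Om x \<partial>mu lam) \<le> ennreal (2 / conj_inv \<phi> 1) * X"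
    by (rule div_bound[OF c1pos _ Om1]) simp
  have c1K: "2 / conj_inv \<phi> 1 \<le> 2048 * K"
  proof -
    have "1 / conj_inv \<phi> 1 \<le> 1024 * K_term \<phi> 1" by (rule inv_cinv1[OF yg sm])
    also have "K_term \<phi> 1 \<le> K" unfolding K_def using Kterm_le_K[OF yg sm, of 0] by simp
    finally show ?thesis using Knn by simp
  qed
    have lev: "ennreal ((1/2)^k) * (\<integral>\<^sup>+x. ennreal (vv w lam x) * of_nat (cnt (S k) x - LL k) \<partial>mu lam)
             \<le> ennreal (128/31 * (real (k + 2) / conj_inv \<phi> (31 ^ LL k))) * X" for k
  proof -
    have cpos: "0 < conj_inv \<phi> (31 ^ LL k)" by (rule cinv_pos[OF yg]) simp
    have big: "\<And>Q. Q \<in> S k \<Longrightarrow> ennreal (t * (1/2)^Suc k) < lux lam Phi f Q" by (auto simp: S_def)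
    have L1: "(\<integral>\<^sup>+x. ennreal (vv w lam x) * of_nat (cnt (S k) x - LL k) \<partial>mu lam) * ennreal (conj_inv \<phi> (31 ^ LL k))
        \<le> ennreal (2 * (32/31 * (2^Suc k * (1 + real (Suc k))))) * X"
      unfolding X_def by (rule level_bound[OF lam sp yg wpos wm fm t SF big])
    have L2: "(\<integral>\<^sup>+x. ennreal (vv w lam x) * of_nat (cnt (S k) x - LL k) \<partial>mu lam)
        \<le> ennreal (2 * (32/31 * (2^Suc k * (1 + real (Suc k)))) / conj_inv \<phi> (31 ^ LL k)) * X"
      by (rule div_bound[OF cpos _ L1]) simp
    have "ennreal ((1/2)^k) * (\<integral>\<^sup>+x. ennreal (vv w lam x) * of_nat (cnt (S k) x - LL k) \<partial>mu lam)
        \<le> ennreal ((1/2)^k) * (ennreal (2 * (32/31 * (2^Suc k * (1 + real (Suc k)))) / conj_inv \<phi> (31 ^ LL k)) * X)"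
      using L2 by (rule mult_left_mono) simp
    also have "\<dots> = ennreal ((1/2)^k * (2 * (32/31 * (2^Suc k * (1 + real (Suc k)))) / conj_inv \<phi> (31 ^ LL k))) * X"
      using cpos by (subst enn_mul) auto
    also have "(1/2::real)^k * (2 * (32/31 * (2^Suc k * (1 + real (Suc k)))) / conj_inv \<phi> (31 ^ LL k))
        = 128/31 * (real (k + 2) / conj_inv \<phi> (31 ^ LL k))"
    proof -
      have h: "(1/2::real)^k * 2^Suc k = 2" by (simp add: power_one_over field_simps)
      have "(1/2::real)^k * (2 * (32/31 * (2^Suc k * (1 + real (Suc k)))) / conj_inv \<phi> (31 ^ LL k))
          = ((1/2::real)^k * 2^Suc k) * (2 * (32/31 * (1 + real (Suc k)))) / conj_inv \<phi> (31 ^ LL k)"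
        by (simp only: times_divide_eq_right mult_ac)
      also have "\<dots> = 2 * (2 * (32/31 * (1 + real (Suc k)))) / conj_inv \<phi> (31 ^ LL k)"
        by (simp only: h)
      also have "\<dots> = 128/31 * (real (k + 2) / conj_inv \<phi> (31 ^ LL k))"
        by (simp add: field_simps)
      finally show ?thesis .
    qed
    finally show ?thesis .
  qed
  have Rint: "(\<integral>\<^sup>+x. ennreal (vv w lam x) * R x \<partial>mu lam) \<le> ennreal (128/31 * (200000 * K)) * X"
  proof -
    have "(\<integral>\<^sup>+x. ennreal (vv w lam x) * R x \<partial>mu lam)
        = (\<integral>\<^sup>+x. (\<Sum>k<N. ennreal ((1/2)^k) * (ennreal (vv w lam x) * of_nat (cnt (S k) x - LL k))) \<partial>mu lam)"
      unfolding R_def by (simp add: sum_distrib_left mult.left_commute)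
    also have "\<dots> = (\<Sum>k<N. ennreal ((1/2)^k) * (\<integral>\<^sup>+x. ennreal (vv w lam x) * of_nat (cnt (S k) x - LL k) \<partial>mu lam))"
      using cnt_meas[OF finS dyS] vv_meas[OF lam sp yg wpos wm fm t]
      by (subst nn_integral_sum) (auto intro!: sum.cong nn_integral_cmult)
    also have "\<dots> \<le> (\<Sum>k<N. ennreal (128/31 * (real (k + 2) / conj_inv \<phi> (31 ^ LL k))) * X)"
      by (intro sum_mono lev)
    also have "\<dots> = (\<Sum>k<N. ennreal (128/31 * (real (k + 2) / conj_inv \<phi> (31 ^ LL k)))) * X"
      by (rule sum_distrib_right[symmetric])
    also have "(\<Sum>k<N. ennreal (128/31 * (real (k + 2) / conj_inv \<phi> (31 ^ LL k)))) = ennreal (\<Sum>k<N. 128/31 * (real (k + 2) / conj_inv \<phi> (31 ^ LL k)))"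
      by (rule sum_ennreal) (use cinv_nonneg[OF yg] in simp)
    also have "(\<Sum>k<N. 128/31 * (real (k + 2) / conj_inv \<phi> (31 ^ LL k))) = 128/31 * (\<Sum>k<N. real (k + 2) / conj_inv \<phi> (31 ^ LL k))"
      by (simp add: sum_distrib_left)
    also have "\<dots> \<le> 128/31 * (200000 * K)" unfolding K_def using main_sum[OF yg sm] by simp
    finally show ?thesis by (simp add: ennreal_leI mult_right_mono order_trans)
  qed
    have "(\<integral>\<^sup>+x. ennreal (vv w lam x) * indicator Ev x \<partial>mu lam)
      \<le> (\<integral>\<^sup>+x. ennreal (vv w lam x) * indicator Om x + ennreal (4/3) * (ennreal (vv w lam x) * R x) \<partial>mu lam)"
  proof (rule nn_integral_mono)
    fix x
    have "ennreal (vv w lam x) * indicator Ev x \<le> ennreal (vv w lam x) * (indicator Om x + ennreal (4/3) * R x)"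
      by (rule mult_left_mono[OF ind]) simp
    then show "ennreal (vv w lam x) * indicator Ev x \<le> ennreal (vv w lam x) * indicator Om x + ennreal (4/3) * (ennreal (vv w lam x) * R x)"
      by (simp add: distrib_left mult.left_commute)
  qed
  also have "\<dots> = (\<integral>\<^sup>+x. ennreal (vv w lam x) * indicator Om x \<partial>mu lam) + ennreal (4/3) * (\<integral>\<^sup>+x. ennreal (vv w lam x) * R x \<partial>mu lam)"
    using Omm Rm vv_meas[OF lam sp yg wpos wm fm t]
    by (subst nn_integral_add) (auto intro: nn_integral_cmult)
  also have "\<dots> \<le> ennreal (2048 * K) * X + ennreal (4/3) * (ennreal (128/31 * (200000 * K)) * X)"
    using Om2 c1K Rint by (intro add_mono mult_left_mono order_trans[OF Om2] mult_right_mono ennreal_leI) auto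
  also have "\<dots> = ennreal (2048 * K) * X + ennreal (4/3 * (128/31 * (200000 * K))) * X"
    by (subst enn_mul) (use Knn in auto)
  also have "\<dots> = (ennreal (2048 * K) + ennreal (4/3 * (128/31 * (200000 * K)))) * X"
    by (rule distrib_right[symmetric])
  also have "\<dots> = ennreal (2048 * K + 4/3 * (128/31 * (200000 * K))) * X"
    by (subst ennreal_plus) (use Knn in auto)
  also have "\<dots> \<le> ennreal (2000000 * K) * X"
    using Knn by (intro mult_right_mono ennreal_leI) auto
  finally show ?thesis unfolding Ev_def X_def K_def .
qed

end

lemma lux_Ioc_Ioo:
  assumes "a < b"
  shows "lux lam \<psi> g {a<..b} = lux lam \<psi> g {a<..<b}"
proof -
  have ae: "AE x in mu lam. x \<notin> {b}" by (rule AE_mu_finite) simp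
  have m: "emeasure (mu lam) {a<..b} = emeasure (mu lam) {a<..<b}"
    by (rule emeasure_eq_AE) (use ae in \<open>auto elim!: eventually_mono\<close>)
  have i: "(\<integral>\<^sup>+x\<in>{a<..b}. h x \<partial>mu lam) = (\<integral>\<^sup>+x\<in>{a<..<b}. h x \<partial>mu lam)" for h :: "real \<Rightarrow> ennreal"
    by (rule nn_integral_cong_AE) (use ae in \<open>auto elim!: eventually_mono simp: indicator_def\<close>)
  show ?thesis unfolding lux_def m i ..
qed

lemma Bm_le_M:
  assumes fin: "finite G" and dy: "G \<subseteq> dyadic" and x: "x \<notin> Sup ` G"
  shows "Bm G (lux lam \<phi> g) x \<le> M_young lam \<phi> g x"
  unfolding Bm_def
proof (rule SUP_least)
  fix P assume P: "P \<in> G"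
  show "lux lam \<phi> g P * indicator P x \<le> M_young lam \<phi> g x"
  proof (cases "x \<in> P")
    case False then show ?thesis by simp
  next
    case True
    obtain a b where ab: "0 \<le> a" "a < b" "P = {a<..b}" using dyadic_Ioc P dy by blast
    have "Sup P = b" using ab by simp
    then have "x \<noteq> b" using x P by force
    then have xo: "x \<in> {a<..<b}" using True ab by auto
    have "lux lam \<phi> g P = lux lam \<phi> g {a<..<b}" using ab by (simp add: lux_Ioc_Ioo)
    also have "\<dots> \<le> M_young lam \<phi> g x"
    proof -
      have mem: "{a<..<b} \<in> {B. \<exists>a b. 0 \<le> a \<and> a < b \<and> B = {a<..<b} \<and> x \<in> B}"
        using ab xo by blast
      show ?thesis unfolding M_young_def by (rule SUP_upper[OF mem])
    qed
    finally show ?thesis using True by simp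
  qed
qed

lemma change_measure:
  assumes wm: "w \<in> borel_measurable borel" and A: "A \<in> sets borel" "A \<subseteq> {0<..}"
    and wpos: "\<And>x. x > 0 \<Longrightarrow> 0 \<le> w x"
  shows "wmeas w A = (\<integral>\<^sup>+x. ennreal (vv w lam x) * indicator A x \<partial>mu lam)"
proof -
  have "(\<integral>\<^sup>+x. ennreal (vv w lam x) * indicator A x \<partial>mu lam)
      = (\<integral>\<^sup>+x. ennreal (indicator {0<..} x * x powr (2 * lam)) * (ennreal (vv w lam x) * indicator A x) \<partial>lborel)"
    using wm A by (subst nn_integral_mu) (auto simp: vv_def)
  also have "\<dots> = (\<integral>\<^sup>+x. ennreal (w x) * indicator A x \<partial>lborel)"
  proof (rule nn_integral_cong)
    fix x
    show "ennreal (indicator {0<..} x * x powr (2 * lam)) * (ennreal (vv w lam x) * indicator A x) = ennreal (w x) * indicator A x"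
    proof (cases "x \<in> A")
      case True
      then have x: "x > 0" using A by auto
      have "x powr (2 * lam) * (w x * x powr (- 2 * lam)) = w x * (x powr (2 * lam) * x powr (- 2 * lam))"
        by (simp add: mult_ac)
      also have "x powr (2 * lam) * x powr (- 2 * lam) = 1" using x by (simp add: powr_add[symmetric])
      finally have e: "x powr (2 * lam) * (w x * x powr (- 2 * lam)) = w x" by simp
      have "ennreal (x powr (2 * lam)) * ennreal (w x * x powr (- 2 * lam)) = ennreal (x powr (2 * lam) * (w x * x powr (- 2 * lam)))"
        by (rule ennreal_mult[symmetric]) (use wpos[OF x] in auto)
      then have pe: "ennreal (indicator {0<..} x * x powr (2 * lam)) * ennreal (vv w lam x) = ennreal (x powr (2 * lam) * (w x * x powr (- 2 * lam)))"
        using x by (simp add: vv_def)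
      have "ennreal (indicator {0<..} x * x powr (2*lam)) * (ennreal (vv w lam x) * indicator A x) = ennreal (indicator {0<..} x * x powr (2*lam)) * ennreal (vv w lam x)"
        using True by simp
      also have "\<dots> = ennreal (x powr (2 * lam) * (w x * x powr (- 2 * lam)))" by (rule pe)
      also have "\<dots> = ennreal (w x)" by (simp only: e)
      also have "\<dots> = ennreal (w x) * indicator A x" using True by simp
      finally show ?thesis .
    qed simp
  qed
  finally show ?thesis by (simp add: wmeas_def)
qed

definition Dn :: "nat \<Rightarrow> real set set" where
  "Dn n = (\<lambda>(k::nat, j::int). {real k * 2 powr real_of_int j <.. (real k + 1) * 2 powr real_of_int j}) ` ({..n} \<times> {-int n..int n})"

lemma Dn_finite: "finite (Dn n)"
  unfolding Dn_def by simp

lemma Dn_mono: "m \<le> n \<Longrightarrow> Dn m \<subseteq> Dn n"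
  unfolding Dn_def by (intro image_mono) auto

lemma Dn_cover: "Q \<in> dyadic \<Longrightarrow> \<exists>n. Q \<in> Dn n"
proof -
  assume "Q \<in> dyadic"
  then obtain k :: nat and j :: int where Q: "Q = {real k * 2 powr j <.. (real k + 1) * 2 powr j}"
    unfolding dyadic_def by blast
  define n where "n = max k (nat \<bar>j\<bar>)"
  have "(k, j) \<in> {..n} \<times> {-int n..int n}" by (auto simp: n_def)
  then have "Q \<in> Dn n" unfolding Dn_def Q by (rule rev_image_eqI) simp
  then show ?thesis by blast
qed

lemma Dn_cover_fin: "finite F \<Longrightarrow> F \<subseteq> dyadic \<Longrightarrow> \<exists>n. F \<subseteq> Dn n"
proof (induction F rule: finite_induct)
  case empty then show ?case by simp
next
  case (insert Q F)
  then obtain n where n: "F \<subseteq> Dn n" by auto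
  have "Q \<in> dyadic" using insert.prems by auto
  then obtain m where m: "Q \<in> Dn m" using Dn_cover by blast
  have "insert Q F \<subseteq> Dn (max n m)" using n m Dn_mono[of n "max n m"] Dn_mono[of m "max n m"] by auto
  then show ?case by blast
qed


theorem lemma8p2:
  fixes lam :: real
  assumes "lam > 0"
  shows "\<exists>C>0. \<forall>S \<phi> w f t.
    sparse lam (31/32) S \<and> young \<phi> \<and> summable (\<lambda>k. K_term \<phi> (Suc k)) \<and>
    (\<forall>x>0. 0 \<le> w x) \<and> loc_int w \<and> f \<in> borel_measurable borel \<and> t > 0 \<longrightarrow>
    wmeas w {x. 0 < x \<and> A_LlogL lam S f x > ennreal t}
      \<le> ennreal (C * K_phi \<phi>) *
        (\<integral>\<^sup>+ x. ennreal (Phi (\<bar>f x\<bar> / t)) * M_young lam \<phi> (\<lambda>y. w y * y powr (-2 * lam)) x \<partial>mu lam)"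
proof (intro exI[of _ "2000000::real"] conjI allI impI)
  show "(0::real) < 2000000" by simp
  note lam = assms
  fix S :: "real set set" and \<phi> :: "real \<Rightarrow> real" and w f :: "real \<Rightarrow> real" and t :: real
  assume H: "sparse lam (31/32) S \<and> young \<phi> \<and> summable (\<lambda>k. K_term \<phi> (Suc k)) \<and>
    (\<forall>x>0. 0 \<le> w x) \<and> loc_int w \<and> f \<in> borel_measurable borel \<and> t > 0"
  then have spS: "sparse lam (31/32) S" and yg: "young \<phi>" and sm: "summable (\<lambda>k. K_term \<phi> (Suc k))"
    and wpos: "\<And>x. x > 0 \<Longrightarrow> 0 \<le> w x" and li: "loc_int w" and fm: "f \<in> borel_measurable borel" and t: "t > 0"
    by auto
  have wm: "w \<in> borel_measurable borel" using li by (simp add: loc_int_def)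
  note [measurable] = wm fm
  obtain E where SD: "S \<subseteq> dyadic"
    and Ep: "\<And>Q. Q \<in> S \<Longrightarrow> E Q \<in> sets borel \<and> E Q \<subseteq> Q \<and> ennreal (31/32) * emeasure (mu lam) Q \<le> emeasure (mu lam) (E Q)"
    and Ed: "disjoint_family_on E S"
    using spS unfolding sparse_def by blast
  define F where "F n = S \<inter> Dn n" for n
  have spF: "spf lam (F n) E" for n
    unfolding spf_def F_def using Dn_finite SD Ep Ed
    by (auto intro: disjoint_family_on_mono)
  define AF where "AF n x = (\<Sum>Q\<in>F n. lux lam Phi f Q * indicator Q x)" for n x
  define En where "En n = {x. 0 < x \<and> ennreal t < AF n x}" for n
  define Ev where "Ev = {x. 0 < x \<and> A_LlogL lam S f x > ennreal t}"
  define v where "v = vv w lam"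
  define RHS where "RHS = (\<integral>\<^sup>+ x. ennreal (Phi (\<bar>f x\<bar> / t)) * M_young lam \<phi> (\<lambda>y. w y * y powr (-2 * lam)) x \<partial>mu lam)"
  have vfun: "(\<lambda>y. w y * y powr (-2 * lam)) = vv w lam" by (simp add: vv_def fun_eq_iff)
  have finF: "finite (F n)" for n by (simp add: F_def Dn_finite)
  have FS: "F n \<subseteq> S" for n by (auto simp: F_def)
  have AFm: "AF n \<in> borel_measurable borel" for n
    unfolding AF_def
  proof (rule borel_measurable_sum)
    fix Q assume "Q \<in> F n"
    then have [measurable]: "Q \<in> sets borel" using FS SD dyadic_sets by auto
    show "(\<lambda>x. lux lam Phi f Q * indicator Q x) \<in> borel_measurable borel" by measurable
  qed
  have Enm: "En n \<in> sets borel" for n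
  proof -
    have "AF n \<in> borel_measurable borel" by (rule AFm)
    then have "{x \<in> space borel. 0 < x \<and> ennreal t < AF n x} \<in> sets borel" by measurable
    then show ?thesis by (simp add: En_def)
  qed
  have Fmono: "F m \<subseteq> F n" if "m \<le> n" for m n using Dn_mono[OF that] by (auto simp: F_def)
  have AFmono: "AF m x \<le> AF n x" if "m \<le> n" for m n x
    unfolding AF_def using Fmono[OF that] finF by (intro sum_mono2) auto
  have inc: "incseq En"
    unfolding incseq_def En_def using AFmono by (auto intro: less_le_trans)
  have EvU: "Ev = (\<Union>n. En n)"
  proof
    show "Ev \<subseteq> (\<Union>n. En n)"
    proof
      fix x assume "x \<in> Ev"
      then have x0: "0 < x" and lt: "ennreal t < A_LlogL lam S f x" by (auto simp: Ev_def)
      then obtain G where G: "G \<in> {F. finite F \<and> F \<subseteq> S}" "ennreal t < (\<Sum>Q\<in>G. lux lam Phi f Q * indicator Q x)"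
        unfolding A_LlogL_def by (auto simp: less_SUP_iff)
      obtain n where n: "G \<subseteq> Dn n" using Dn_cover_fin[of G] G SD by auto
      have "G \<subseteq> F n" using n G by (auto simp: F_def)
      then have "(\<Sum>Q\<in>G. lux lam Phi f Q * indicator Q x) \<le> AF n x"
        unfolding AF_def using finF by (intro sum_mono2) auto
      then show "x \<in> (\<Union>n. En n)" using G x0 by (auto simp: En_def intro: less_le_trans)
    qed
    show "(\<Union>n. En n) \<subseteq> Ev"
    proof
      fix x assume "x \<in> (\<Union>n. En n)"
      then obtain n where x0: "0 < x" and lt: "ennreal t < AF n x" by (auto simp: En_def)
      have "AF n x \<le> A_LlogL lam S f x"
        unfolding A_LlogL_def AF_def using finF FS by (intro SUP_upper) auto
      then show "x \<in> Ev" using x0 lt by (auto simp: Ev_def intro: less_le_trans)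
    qed
  qed
  define M where "M = density (mu lam) (\<lambda>x. ennreal (v x))"
  have vm: "v \<in> borel_measurable borel" unfolding v_def vv_def by measurable
  have eM: "emeasure M A = (\<integral>\<^sup>+x. ennreal (v x) * indicator A x \<partial>mu lam)" if "A \<in> sets borel" for A
    unfolding M_def using that vm by (subst emeasure_density) auto
  have bound_n: "emeasure M (En n) \<le> ennreal (2000000 * K_phi \<phi>) * RHS" for n
  proof -
    have "emeasure M (En n) = (\<integral>\<^sup>+x. ennreal (vv w lam x) * indicator {x. 0 < x \<and> ennreal t < (\<Sum>Q\<in>F n. lux lam Phi f Q * indicator Q x)} x \<partial>mu lam)"
      using Enm by (simp add: eM v_def En_def AF_def)
    also have "\<dots> \<le> ennreal (2000000 * K_phi \<phi>) * (\<integral>\<^sup>+x. hh f t x * Bm (F n) (lux lam \<phi> (vv w lam)) x \<partial>mu lam)"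
      by (rule finite_main[OF lam spF yg wpos wm fm t sm])
    also have "(\<integral>\<^sup>+x. hh f t x * Bm (F n) (lux lam \<phi> (vv w lam)) x \<partial>mu lam) \<le> RHS"
      unfolding RHS_def vfun
    proof (rule nn_integral_mono_AE)
      have "AE x in mu lam. x \<notin> Sup ` F n" by (rule AE_mu_finite) (simp add: finF)
      then show "AE x in mu lam. hh f t x * Bm (F n) (lux lam \<phi> (vv w lam)) x \<le> ennreal (Phi (\<bar>f x\<bar> / t)) * M_young lam \<phi> (vv w lam) x"
      proof (rule eventually_mono)
        fix x assume x: "x \<notin> Sup ` F n"
        have "Bm (F n) (lux lam \<phi> (vv w lam)) x \<le> M_young lam \<phi> (vv w lam) x"
          by (rule Bm_le_M[OF finF _ x]) (use FS SD in auto)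
        then show "hh f t x * Bm (F n) (lux lam \<phi> (vv w lam)) x \<le> ennreal (Phi (\<bar>f x\<bar> / t)) * M_young lam \<phi> (vv w lam) x"
          unfolding hh_def by (rule mult_left_mono) simp
      qed
    qed
    then have "ennreal (2000000 * K_phi \<phi>) * (\<integral>\<^sup>+x. hh f t x * Bm (F n) (lux lam \<phi> (vv w lam)) x \<partial>mu lam)
        \<le> ennreal (2000000 * K_phi \<phi>) * RHS" by (rule mult_left_mono) simp
    finally show ?thesis .
  qed
  have Evm: "Ev \<in> sets borel" unfolding EvU using Enm by auto
  have Evpos: "Ev \<subseteq> {0<..}" by (auto simp: Ev_def)
  have "wmeas w Ev = (\<integral>\<^sup>+x. ennreal (vv w lam x) * indicator Ev x \<partial>mu lam)"
    by (rule change_measure[OF wm Evm Evpos wpos])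
  also have "\<dots> = emeasure M Ev" using Evm by (simp add: eM v_def)
  also have "\<dots> = (SUP n. emeasure M (En n))"
    unfolding EvU using inc Enm by (intro SUP_emeasure_incseq[symmetric]) (auto simp: M_def)
  also have "\<dots> \<le> ennreal (2000000 * K_phi \<phi>) * RHS"
    by (rule SUP_least) (rule bound_n)
  finally show "wmeas w {x. 0 < x \<and> A_LlogL lam S f x > ennreal t}
      \<le> ennreal (2000000 * K_phi \<phi>) *
        (\<integral>\<^sup>+ x. ennreal (Phi (\<bar>f x\<bar> / t)) * M_young lam \<phi> (\<lambda>y. w y * y powr (-2 * lam)) x \<partial>mu lam)"
    unfolding Ev_def RHS_def .
qed

end
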